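(* Let $\mathbb{A}$, its multiplication, the decomposition $A_3=C\oplus L$, the complex $\mathbb{B}=\mathbb{B}(\mathbb{A},C)$ and the ideal $J_C$ be as in the context. Suppose that $\operatorname{grade}J_C\ge 4$. Then $\mathbb{B}$ is acyclic. Moreover, either $\operatorname{grade}J_C=4$ or $J_C=R$.
   Context: Let $R$ be a commutative Noetherian ring and let $p\ge 1$, $q\ge 3$ be integers. Let $\mathbb{A}\colon 0\to A_3\xrightarrow{d_3}A_2\xrightarrow{d_2}A_1\xrightarrow{d_1}A_0=R$ be a complex of finitely generated free $R$-modules with $\operatorname{rank}A_1=p+2$, $\operatorname{rank}A_2=p+q$, $\operatorname{rank}A_3=q-1$, which is acyclic and whose dual complex $\mathbb{A}^*$ is also acyclic (equivalently, $H_0(\mathbb{A})=R/I$ with $I=\operatorname{im}d_1$ either a grade $3$ perfect ideal or the unit ideal). Fix a differential graded algebra structure on $\mathbb{A}$: $R$-bilinear products $A_1\times A_1\to A_2$ (alternating: $e\cdot e=0$, $e\cdot e'=-e'\cdot e$) and $A_1\times A_2\to A_3$ satisfying the Leibniz rules $d_2(e\cdot e')=d_1(e)e'-d_1(e')e$ and $d_3(e\cdot f)=d_1(e)f+d_2(f)\cdot e$ for $e,e'\in A_1$, $f\in A_2$. Fix a decomposition $A_3=C\oplus L$ with $C$ free of rank $q-2$ and $L$ free of rank $1$; let $\eta\colon A_3\to L$ be the projection and $\iota\colon C\to A_3$ the inclusion. Define the sequence $\mathbb{B}=\mathbb{B}(\mathbb{A},C)\colon 0\to C\xrightarrow{\delta_4}A_2\xrightarrow{\delta_3}\operatorname{Hom}(A_1,L)\oplus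 A_1\xrightarrow{\delta_2}\operatorname{Hom}(A_2,L)\xrightarrow{\delta_1}\operatorname{Hom}(C,L)$ by $\delta_4=d_3\circ\iota$; $\delta_3(f)=\big(e\mapsto \eta(e\cdot f),\ d_2(f)\big)$; $\delta_2(\varphi,e)=\big(f\mapsto \varphi(d_2f)+\eta(e\cdot f)\big)$; $\delta_1(\psi)=\psi\circ d_3\circ\iota$. (Up to the twist by $L$, $\delta_2=\delta_3^*$ and $\delta_1=\delta_4^*$.) Let $J_C=I_{q-2}(\delta_4)$ denote the ideal generated by the $(q-2)\times(q-2)$ minors of $\delta_4$. The grade of an ideal $J$ is $\inf\{i:\operatorname{Ext}^i_R(R/J,R)\neq 0\}$ (equal to $\infty$ for $J=R$). *)

theory Defs
  imports "HOL-Combinatorics.Permutations" "HOL-Library.Extended_Nat"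
begin

definition is_ideal :: "'a::comm_ring_1 set \<Rightarrow> bool" where
  "is_ideal I \<longleftrightarrow> 0 \<in> I \<and> (\<forall>x\<in>I. \<forall>y\<in>I. x + y \<in> I) \<and> (\<forall>a. \<forall>x\<in>I. a * x \<in> I)"

definition ideal_gen :: "'a::comm_ring_1 set \<Rightarrow> 'a set" where
  "ideal_gen S = {x. \<exists>T c. finite T \<and> T \<subseteq> S \<and> x = (\<Sum>s\<in>T. c s * s)}"

definition noetherian_ring :: "'a::comm_ring_1 itself \<Rightarrow> bool" where
  "noetherian_ring _ \<longleftrightarrow> (\<forall>I::'a set. is_ideal I \<longrightarrow> (\<exists>S. finite S \<and> I = ideal_gen S))"

text \<open>R^n = functions nat => R vanishing from index n on.\<close>
definition vecs :: "nat \<Rightarrow> (nat \<Rightarrow> 'a::comm_ring_1) set" where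
  "vecs n = {v. \<forall>i\<ge>n. v i = 0}"

definition smul :: "'a::comm_ring_1 \<Rightarrow> (nat \<Rightarrow> 'a) \<Rightarrow> (nat \<Rightarrow> 'a)" where
  "smul a v = (\<lambda>i. a * v i)"

text \<open>A k x m matrix M acting as a map R^m -> R^k.\<close>
definition mat_app :: "nat \<Rightarrow> nat \<Rightarrow> (nat \<Rightarrow> nat \<Rightarrow> 'a::comm_ring_1) \<Rightarrow> (nat \<Rightarrow> 'a) \<Rightarrow> (nat \<Rightarrow> 'a)" where
  "mat_app k m M v = (\<lambda>r. if r < k then (\<Sum>c<m. M r c * v c) else 0)"

definition tr :: "(nat \<Rightarrow> nat \<Rightarrow> 'a) \<Rightarrow> (nat \<Rightarrow> nat \<Rightarrow> 'a)" where
  "tr M = (\<lambda>i j. M j i)"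

definition mker :: "nat \<Rightarrow> nat \<Rightarrow> (nat \<Rightarrow> nat \<Rightarrow> 'a::comm_ring_1) \<Rightarrow> (nat \<Rightarrow> 'a) set" where
  "mker k m M = {v \<in> vecs m. mat_app k m M v = (\<lambda>_. 0)}"

definition mimg :: "nat \<Rightarrow> nat \<Rightarrow> (nat \<Rightarrow> nat \<Rightarrow> 'a::comm_ring_1) \<Rightarrow> (nat \<Rightarrow> 'a) set" where
  "mimg k m M = mat_app k m M ` vecs m"

definition bilinear_on :: "nat \<Rightarrow> nat \<Rightarrow> nat \<Rightarrow> ((nat \<Rightarrow> 'a::comm_ring_1) \<Rightarrow> (nat \<Rightarrow> 'a) \<Rightarrow> (nat \<Rightarrow> 'a)) \<Rightarrow> bool" where
  "bilinear_on a b c P \<longleftrightarrow>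
     (\<forall>u\<in>vecs a. \<forall>v\<in>vecs b. P u v \<in> vecs c) \<and>
     (\<forall>u\<in>vecs a. \<forall>u'\<in>vecs a. \<forall>v\<in>vecs b. P (\<lambda>i. u i + u' i) v = (\<lambda>i. P u v i + P u' v i)) \<and>
     (\<forall>u\<in>vecs a. \<forall>v\<in>vecs b. \<forall>v'\<in>vecs b. P u (\<lambda>i. v i + v' i) = (\<lambda>i. P u v i + P u v' i)) \<and>
     (\<forall>s. \<forall>u\<in>vecs a. \<forall>v\<in>vecs b. P (smul s u) v = smul s (P u v) \<and> P u (smul s v) = smul s (P u v))"

definition lin_fun :: "nat \<Rightarrow> ((nat \<Rightarrow> 'a::comm_ring_1) \<Rightarrow> 'a) set" where
  "lin_fun n = {\<phi>. (\<forall>u\<in>vecs n. \<forall>v\<in>vecs n. \<phi> (\<lambda>i. u i + v i) = \<phi> u + \<phi> v) \<and>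
                   (\<forall>s. \<forall>u\<in>vecs n. \<phi> (smul s u) = s * \<phi> u) \<and>
                   (\<forall>u. u \<notin> vecs n \<longrightarrow> \<phi> u = 0)}"

definition det_nat :: "nat \<Rightarrow> (nat \<Rightarrow> nat \<Rightarrow> 'a::comm_ring_1) \<Rightarrow> 'a" where
  "det_nat k M = (\<Sum>\<sigma>\<in>{\<sigma>. \<sigma> permutes {..<k}}. of_int (sign \<sigma>) * (\<Prod>i<k. M i (\<sigma> i)))"

definition max_minors :: "nat \<Rightarrow> nat \<Rightarrow> (nat \<Rightarrow> nat \<Rightarrow> 'a::comm_ring_1) \<Rightarrow> 'a set" where
  "max_minors m k M = {det_nat k (\<lambda>i j. M (s i) j) | s.
       strict_mono_on {..<k} s \<and> s ` {..<k} \<subseteq> {..<m}}"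

definition minor_ideal :: "nat \<Rightarrow> nat \<Rightarrow> (nat \<Rightarrow> nat \<Rightarrow> 'a::comm_ring_1) \<Rightarrow> 'a set" where
  "minor_ideal m k M = ideal_gen (max_minors m k M)"

text \<open>A free resolution of R/J by finitely generated free modules:
  F_i = R^(n i), n 0 = 1, D i (i >= 1) is the n(i-1) x n(i) matrix of F_i -> F_(i-1),
  im D_1 = J (inside R = R^1), and exactness at every F_i, i >= 1.\<close>
definition free_resolution :: "'a::comm_ring_1 set \<Rightarrow> (nat \<Rightarrow> nat) \<Rightarrow> (nat \<Rightarrow> nat \<Rightarrow> nat \<Rightarrow> 'a) \<Rightarrow> bool" where
  "free_resolution J n D \<longleftrightarrow> n 0 = 1 \<and>
     mimg 1 (n 1) (D 1) = {v \<in> vecs 1. v 0 \<in> J} \<and>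
     (\<forall>i\<ge>1. mker (n (i - 1)) (n i) (D i) = mimg (n i) (n (i + 1)) (D (i + 1)))"

text \<open>Ext^i(R/J,R) = H^i(Hom(F,R)); Hom(F_i,R) = R^(n i), coboundary = transpose.
  Ext is independent of the resolution; we require vanishing for every resolution.\<close>
definition ext_zero :: "'a::comm_ring_1 set \<Rightarrow> nat \<Rightarrow> bool" where
  "ext_zero J i \<longleftrightarrow> (\<forall>n D. free_resolution J n D \<longrightarrow>
      mker (n (i + 1)) (n i) (tr (D (i + 1))) \<subseteq>
        (if i = 0 then {\<lambda>_. 0} else mimg (n i) (n (i - 1)) (tr (D i))))"

definition grade :: "'a::comm_ring_1 set \<Rightarrow> enat" where
  "grade J = (if (\<forall>i. ext_zero J i) then \<infinity> else enat (LEAST i. \<not> ext_zero J i))"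

text \<open>A : 0 -> R^(q-1) -D3-> R^(p+q) -D2-> R^(p+2) -D1-> R^1.
  Acyclic: exact at A_1, A_2, A_3. Dual A^* acyclic: exact at A_0^*, A_1^*, A_2^*.\<close>
definition acyclic_A :: "nat \<Rightarrow> nat \<Rightarrow> (nat \<Rightarrow> nat \<Rightarrow> 'a::comm_ring_1) \<Rightarrow> (nat \<Rightarrow> nat \<Rightarrow> 'a) \<Rightarrow> (nat \<Rightarrow> nat \<Rightarrow> 'a) \<Rightarrow> bool" where
  "acyclic_A p q D1 D2 D3 \<longleftrightarrow>
     mker 1 (p + 2) D1 = mimg (p + 2) (p + q) D2 \<and>
     mker (p + 2) (p + q) D2 = mimg (p + q) (q - 1) D3 \<and>
     mker (p + q) (q - 1) D3 = {\<lambda>_. 0}"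

definition dual_acyclic_A :: "nat \<Rightarrow> nat \<Rightarrow> (nat \<Rightarrow> nat \<Rightarrow> 'a::comm_ring_1) \<Rightarrow> (nat \<Rightarrow> nat \<Rightarrow> 'a) \<Rightarrow> (nat \<Rightarrow> nat \<Rightarrow> 'a) \<Rightarrow> bool" where
  "dual_acyclic_A p q D1 D2 D3 \<longleftrightarrow>
     mker (p + 2) 1 (tr D1) = {\<lambda>_. 0} \<and>
     mker (p + q) (p + 2) (tr D2) = mimg (p + 2) 1 (tr D1) \<and>
     mker (q - 1) (p + q) (tr D3) = mimg (p + q) (p + 2) (tr D2)"

text \<open>DG algebra structure: products m11 : A_1 x A_1 -> A_2 and m12 : A_1 x A_2 -> A_3,
  bilinear, m11 alternating, with the Leibniz rules.  d1(e) is the scalar (D1 e)_0.\<close>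
definition dga_structure :: "nat \<Rightarrow> nat \<Rightarrow> (nat \<Rightarrow> nat \<Rightarrow> 'a::comm_ring_1) \<Rightarrow> (nat \<Rightarrow> nat \<Rightarrow> 'a) \<Rightarrow> (nat \<Rightarrow> nat \<Rightarrow> 'a)
     \<Rightarrow> ((nat \<Rightarrow> 'a) \<Rightarrow> (nat \<Rightarrow> 'a) \<Rightarrow> (nat \<Rightarrow> 'a)) \<Rightarrow> ((nat \<Rightarrow> 'a) \<Rightarrow> (nat \<Rightarrow> 'a) \<Rightarrow> (nat \<Rightarrow> 'a)) \<Rightarrow> bool" where
  "dga_structure p q D1 D2 D3 m11 m12 \<longleftrightarrow>
     bilinear_on (p + 2) (p + 2) (p + q) m11 \<and>
     bilinear_on (p + 2) (p + q) (q - 1) m12 \<and>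
     (\<forall>e\<in>vecs (p + 2). m11 e e = (\<lambda>_. 0)) \<and>
     (\<forall>e\<in>vecs (p + 2). \<forall>e'\<in>vecs (p + 2). m11 e e' = (\<lambda>i. - m11 e' e i)) \<and>
     (\<forall>e\<in>vecs (p + 2). \<forall>e'\<in>vecs (p + 2).
        mat_app (p + 2) (p + q) D2 (m11 e e') =
          (\<lambda>i. mat_app 1 (p + 2) D1 e 0 * e' i - mat_app 1 (p + 2) D1 e' 0 * e i)) \<and>
     (\<forall>e\<in>vecs (p + 2). \<forall>f\<in>vecs (p + q).
        mat_app (p + q) (q - 1) D3 (m12 e f) =
          (\<lambda>i. mat_app 1 (p + 2) D1 e 0 * f i + m11 (mat_app (p + 2) (p + q) D2 f) e i))"

text \<open>C = R^(q-2) embedded by the (q-1) x (q-2) matrix Iota, L = R embedded by the vector Lv;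
  Kap and Eta are the corresponding projections (Eta : A_3 -> L = R), forming a biproduct.\<close>
definition lin_form :: "nat \<Rightarrow> (nat \<Rightarrow> 'a::comm_ring_1) \<Rightarrow> (nat \<Rightarrow> 'a) \<Rightarrow> 'a" where
  "lin_form m w v = (\<Sum>j<m. w j * v j)"

definition id_mat :: "nat \<Rightarrow> nat \<Rightarrow> 'a::comm_ring_1" where
  "id_mat i j = (if i = j then 1 else 0)"

definition mat_mul :: "nat \<Rightarrow> (nat \<Rightarrow> nat \<Rightarrow> 'a::comm_ring_1) \<Rightarrow> (nat \<Rightarrow> nat \<Rightarrow> 'a) \<Rightarrow> (nat \<Rightarrow> nat \<Rightarrow> 'a)" where
  "mat_mul m M N = (\<lambda>i j. \<Sum>l<m. M i l * N l j)"

definition decomposition :: "nat \<Rightarrow> (nat \<Rightarrow> nat \<Rightarrow> 'a::comm_ring_1) \<Rightarrow> (nat \<Rightarrow> 'a) \<Rightarrow> (nat \<Rightarrow> nat \<Rightarrow> 'a) \<Rightarrow> (nat \<Rightarrow> 'a) \<Rightarrow> bool" where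
  "decomposition q Iota Lv Kap Eta \<longleftrightarrow>
     (\<forall>i<q - 2. \<forall>j<q - 2. mat_mul (q - 1) Kap Iota i j = id_mat i j) \<and>
     lin_form (q - 1) Eta Lv = 1 \<and>
     (\<forall>j<q - 2. lin_form (q - 1) Eta (\<lambda>l. Iota l j) = 0) \<and>
     (\<forall>i<q - 2. lin_form (q - 1) (\<lambda>l. Kap i l) Lv = 0) \<and>
     (\<forall>i<q - 1. \<forall>j<q - 1. mat_mul (q - 2) Iota Kap i j + Lv i * Eta j = id_mat i j)"

definition delta4 :: "nat \<Rightarrow> nat \<Rightarrow> (nat \<Rightarrow> nat \<Rightarrow> 'a::comm_ring_1) \<Rightarrow> (nat \<Rightarrow> nat \<Rightarrow> 'a) \<Rightarrow> (nat \<Rightarrow> 'a) \<Rightarrow> (nat \<Rightarrow> 'a)" where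
  "delta4 p q D3 Iota c = mat_app (p + q) (q - 1) D3 (mat_app (q - 1) (q - 2) Iota c)"

definition delta4_mat :: "nat \<Rightarrow> (nat \<Rightarrow> nat \<Rightarrow> 'a::comm_ring_1) \<Rightarrow> (nat \<Rightarrow> nat \<Rightarrow> 'a) \<Rightarrow> (nat \<Rightarrow> nat \<Rightarrow> 'a)" where
  "delta4_mat q D3 Iota = mat_mul (q - 1) D3 Iota"

definition delta3 :: "nat \<Rightarrow> nat \<Rightarrow> (nat \<Rightarrow> nat \<Rightarrow> 'a::comm_ring_1) \<Rightarrow> ((nat \<Rightarrow> 'a) \<Rightarrow> (nat \<Rightarrow> 'a) \<Rightarrow> (nat \<Rightarrow> 'a))
     \<Rightarrow> (nat \<Rightarrow> 'a) \<Rightarrow> (nat \<Rightarrow> 'a) \<Rightarrow> ((nat \<Rightarrow> 'a) \<Rightarrow> 'a) \<times> (nat \<Rightarrow> 'a)" where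
  "delta3 p q D2 m12 Eta f =
     ((\<lambda>e. if e \<in> vecs (p + 2) then lin_form (q - 1) Eta (m12 e f) else 0),
      mat_app (p + 2) (p + q) D2 f)"

definition delta2 :: "nat \<Rightarrow> nat \<Rightarrow> (nat \<Rightarrow> nat \<Rightarrow> 'a::comm_ring_1) \<Rightarrow> ((nat \<Rightarrow> 'a) \<Rightarrow> (nat \<Rightarrow> 'a) \<Rightarrow> (nat \<Rightarrow> 'a))
     \<Rightarrow> (nat \<Rightarrow> 'a) \<Rightarrow> ((nat \<Rightarrow> 'a) \<Rightarrow> 'a) \<times> (nat \<Rightarrow> 'a) \<Rightarrow> ((nat \<Rightarrow> 'a) \<Rightarrow> 'a)" where
  "delta2 p q D2 m12 Eta x =
     (\<lambda>f. if f \<in> vecs (p + q)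
          then fst x (mat_app (p + 2) (p + q) D2 f) + lin_form (q - 1) Eta (m12 (snd x) f) else 0)"

definition delta1 :: "nat \<Rightarrow> nat \<Rightarrow> (nat \<Rightarrow> nat \<Rightarrow> 'a::comm_ring_1) \<Rightarrow> (nat \<Rightarrow> nat \<Rightarrow> 'a)
     \<Rightarrow> ((nat \<Rightarrow> 'a) \<Rightarrow> 'a) \<Rightarrow> ((nat \<Rightarrow> 'a) \<Rightarrow> 'a)" where
  "delta1 p q D3 Iota \<psi> = (\<lambda>c. if c \<in> vecs (q - 2) then \<psi> (delta4 p q D3 Iota c) else 0)"

text \<open>B: 0 -> C -> A_2 -> Hom(A_1,L) (+) A_1 -> Hom(A_2,L) -> Hom(C,L) is acyclic:
  exact at C, A_2, Hom(A_1,L) (+) A_1 and Hom(A_2,L) (homology vanishes in positions >= 1).\<close>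
definition B_acyclic :: "nat \<Rightarrow> nat \<Rightarrow> (nat \<Rightarrow> nat \<Rightarrow> 'a::comm_ring_1) \<Rightarrow> (nat \<Rightarrow> nat \<Rightarrow> 'a)
     \<Rightarrow> ((nat \<Rightarrow> 'a) \<Rightarrow> (nat \<Rightarrow> 'a) \<Rightarrow> (nat \<Rightarrow> 'a)) \<Rightarrow> (nat \<Rightarrow> nat \<Rightarrow> 'a) \<Rightarrow> (nat \<Rightarrow> 'a) \<Rightarrow> bool" where
  "B_acyclic p q D2 D3 m12 Iota Eta \<longleftrightarrow>
     {c \<in> vecs (q - 2). delta4 p q D3 Iota c = (\<lambda>_. 0)} = {\<lambda>_. 0} \<and>
     {f \<in> vecs (p + q). delta3 p q D2 m12 Eta f = ((\<lambda>_. 0), (\<lambda>_. 0))} = delta4 p q D3 Iota ` vecs (q - 2) \<and>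
     {x \<in> lin_fun (p + 2) \<times> vecs (p + 2). delta2 p q D2 m12 Eta x = (\<lambda>_. 0)} = delta3 p q D2 m12 Eta ` vecs (p + q) \<and>
     {\<psi> \<in> lin_fun (p + q). delta1 p q D3 Iota \<psi> = (\<lambda>_. 0)} = delta2 p q D2 m12 Eta ` (lin_fun (p + 2) \<times> vecs (p + 2))"

end

theory Submission
  imports Defs "Jordan_Normal_Form.Determinant"
begin


definition mv :: "nat \<Rightarrow> (nat \<Rightarrow> nat \<Rightarrow> 'a::comm_ring_1) \<Rightarrow> (nat \<Rightarrow> 'a) \<Rightarrow> (nat \<Rightarrow> 'a)" where
  "mv m M v = (\<lambda>i. \<Sum>j<m. M i j * v j)"

definition trunc :: "nat \<Rightarrow> (nat \<Rightarrow> 'a::zero) \<Rightarrow> (nat \<Rightarrow> 'a)" where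
  "trunc m v = (\<lambda>i. if i < m then v i else 0)"

definition EXA :: "nat \<Rightarrow> nat \<Rightarrow> nat \<Rightarrow> (nat \<Rightarrow> nat \<Rightarrow> 'a::comm_ring_1) \<Rightarrow> (nat \<Rightarrow> nat \<Rightarrow> 'a) \<Rightarrow> bool" where
  "EXA k m m' M N \<longleftrightarrow> (\<forall>v. (\<forall>i<k. mv m M v i = 0) \<longrightarrow> (\<exists>w. \<forall>i<m. v i = mv m' N w i))"

lemma trunc_vecs[simp]: "trunc m v \<in> vecs m"
  by (simp add: trunc_def vecs_def)

lemma mv_cong: "(\<And>j. j < m \<Longrightarrow> v j = v' j) \<Longrightarrow> mv m M v = mv m M v'"
  unfolding mv_def by (intro ext sum.cong) auto

lemma mv_trunc[simp]: "mv m M (trunc m v) = mv m M v"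
  by (rule mv_cong) (simp add: trunc_def)

lemma mat_app_mv: "mat_app k m M v = (\<lambda>r. if r < k then mv m M v r else 0)"
  unfolding mat_app_def mv_def by simp

lemma sum_delta_mult[simp]: "(\<Sum>j<(m::nat). f j * (if j = c then 1 else (0::'a::comm_ring_1))) = (if c < m then f c else 0)"
proof -
  have "(\<Sum>j<m. f j * (if j = c then 1 else (0::'a))) = (\<Sum>j<m. if j = c then f j else 0)"
    by (rule sum.cong) auto
  also have "\<dots> = (if c < m then f c else 0)" using sum.delta[OF finite_lessThan[of m], of c f] by simp
  finally show ?thesis .
qed

lemma vecs_eqI: "v \<in> vecs m \<Longrightarrow> w \<in> vecs m \<Longrightarrow> (\<And>i. i < m \<Longrightarrow> v i = w i) \<Longrightarrow> v = w"
proof (rule ext)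
  fix i assume a: "v \<in> vecs m" "w \<in> vecs m" "\<And>i. i < m \<Longrightarrow> v i = w i"
  show "v i = w i"
  proof (cases "i < m")
    case False then show ?thesis using a(1,2) by (simp add: vecs_def)
  qed (use a in auto)
qed

lemma mat_app_vecs[simp]: "mat_app k m M v \<in> vecs k"
  by (simp add: mat_app_def vecs_def)

lemma EXA_from_eq:
  assumes "mker k m M = mimg m m' N"
  shows "EXA k m m' M N"
  unfolding EXA_def
proof (intro allI impI)
  fix v assume h: "\<forall>i<k. mv m M v i = 0"
  have "trunc m v \<in> mker k m M"
    using h by (auto simp: mker_def mat_app_mv)
  then have "trunc m v \<in> mimg m m' N" using assms by simp
  then obtain w where w: "trunc m v = mat_app m m' N w" by (auto simp: mimg_def)
  show "\<exists>w. \<forall>i<m. v i = mv m' N w i"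
  proof (intro exI allI impI)
    fix i assume "i < m"
    then show "v i = mv m' N w i" using fun_cong[OF w, of i] by (simp add: trunc_def mat_app_mv)
  qed
qed

lemma complex_from_eq:
  assumes "mimg m m' N \<subseteq> mker k m M" and "r < k" and "c < m'"
  shows "mat_mul m M N r c = 0"
proof -
  let ?e = "\<lambda>j. if j = c then (1::'a) else 0"
  have "?e \<in> vecs m'" using assms(3) by (simp add: vecs_def)
  then have "mat_app m m' N ?e \<in> mker k m M" using assms(1) by (auto simp: mimg_def)
  then have "mat_app k m M (mat_app m m' N ?e) r = 0" by (simp add: mker_def)
  moreover have "mat_app m m' N ?e = trunc m (\<lambda>l. N l c)"
    using assms(3) by (auto simp: mat_app_def trunc_def if_distrib cong: if_cong)
  ultimately show ?thesis using assms(2,3) by (simp add: mat_app_mv mv_def mat_mul_def)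
qed


definition ROW :: "nat \<Rightarrow> nat \<Rightarrow> nat \<Rightarrow> (nat \<Rightarrow> nat \<Rightarrow> 'a::comm_ring_1) \<Rightarrow> (nat \<Rightarrow> nat \<Rightarrow> 'a) \<Rightarrow> bool" where
  "ROW k m m' Dn Dn1 \<longleftrightarrow> (\<forall>v. (\<forall>c<k. (\<Sum>l<m. v l * Dn1 l c) = 0) \<longrightarrow> (\<exists>w. \<forall>l<m. v l = (\<Sum>r<m'. w r * Dn r l)))"

lemma mm_assoc: "mat_mul b (mat_mul a A B) C = mat_mul a A (mat_mul b B C)"
  unfolding mat_mul_def
  by (intro ext) (simp add: sum_distrib_left sum_distrib_right mult.assoc sum.swap[of _ "{..<b}"])

lemma mm_cong: "(\<And>t. t < a \<Longrightarrow> A i t = A' i t) \<Longrightarrow> (\<And>t. t < a \<Longrightarrow> B t j = B' t j) \<Longrightarrow>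
   mat_mul a A B i j = mat_mul a A' B' i j"
  unfolding mat_mul_def by (rule sum.cong) auto

lemma mm_diff_left: "mat_mul a (\<lambda>i j. A i j - A' i j) B i j = mat_mul a A B i j - mat_mul a A' B i j"
  unfolding mat_mul_def by (simp add: left_diff_distrib sum_subtractf)

lemma mm_diff_right: "mat_mul a A (\<lambda>i j. B i j - B' i j) i j = mat_mul a A B i j - mat_mul a A B' i j"
  unfolding mat_mul_def by (simp add: right_diff_distrib sum_subtractf)

lemma mm_add_right: "mat_mul a A (\<lambda>i j. B i j + B' i j) i j = mat_mul a A B i j + mat_mul a A B' i j"
  unfolding mat_mul_def by (simp add: distrib_left sum.distrib)

lemma mm_zero_dim[simp]: "mat_mul 0 A B i j = 0"
  unfolding mat_mul_def by simp

lemma mm_one_dim: "mat_mul (Suc 0) A B i j = A i 0 * B 0 j"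
  unfolding mat_mul_def by simp

lemma mv_mm: "mv a A (\<lambda>t. B t j) i = mat_mul a A B i j"
  unfolding mv_def mat_mul_def by simp

lemma EXA_cols:
  assumes "EXA k m m' M N" and "\<forall>r<k. \<forall>c<C. mat_mul m M X r c = 0"
  shows "\<exists>Y. \<forall>i<m. \<forall>c<C. X i c = mat_mul m' N Y i c"
proof -
  have "\<forall>c\<in>{..<C}. \<exists>w. \<forall>i<m. X i c = mv m' N w i"
  proof
    fix c assume "c \<in> {..<C}"
    then have "\<forall>r<k. mv m M (\<lambda>t. X t c) r = 0" using assms(2) by (simp add: mv_mm)
    then show "\<exists>w. \<forall>i<m. X i c = mv m' N w i" using assms(1) unfolding EXA_def by blast
  qed
  then obtain f where f: "\<forall>c\<in>{..<C}. \<forall>i<m. X i c = mv m' N (f c) i" by metis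
  show ?thesis
    by (rule exI[of _ "\<lambda>l c. f c l"]) (use f in \<open>auto simp: mv_def mat_mul_def\<close>)
qed

lemma ROW_rows:
  assumes "ROW k m m' Dn Dn1" and "\<forall>r<R. \<forall>c<k. mat_mul m X Dn1 r c = 0"
  shows "\<exists>H. \<forall>r<R. \<forall>l<m. X r l = mat_mul m' H Dn r l"
proof -
  have "\<forall>r\<in>{..<R}. \<exists>w. \<forall>l<m. X r l = (\<Sum>t<m'. w t * Dn t l)"
  proof
    fix r assume "r \<in> {..<R}"
    then have "\<forall>c<k. (\<Sum>l<m. X r l * Dn1 l c) = 0" using assms(2) by (simp add: mat_mul_def)
    then show "\<exists>w. \<forall>l<m. X r l = (\<Sum>t<m'. w t * Dn t l)" using assms(1) unfolding ROW_def by blast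
  qed
  then obtain f where f: "\<forall>r\<in>{..<R}. \<forall>l<m. X r l = (\<Sum>t<m'. f r t * Dn t l)" by metis
  show ?thesis
    by (rule exI[of _ "\<lambda>r t. f r t"]) (use f in \<open>auto simp: mat_mul_def\<close>)
qed

lemma fwd_step:
  assumes E: "\<forall>i<a0. \<forall>c<b1. mat_mul a1 P f i c = mat_mul b0 g D i c"
    and DD: "\<forall>r<b0. \<forall>c<b2. mat_mul b1 D D' r c = 0"
    and X: "EXA a0 a1 a2 P P'"
  shows "\<exists>f'. \<forall>i<a1. \<forall>c<b2. mat_mul b1 f D' i c = mat_mul a2 P' f' i c"
proof (rule EXA_cols[OF X], intro allI impI)
  fix i c assume i: "i < a0" and c: "c < b2"
  have "mat_mul a1 P (mat_mul b1 f D') i c = mat_mul b1 (mat_mul a1 P f) D' i c"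
    by (simp add: mm_assoc)
  also have "\<dots> = mat_mul b1 (mat_mul b0 g D) D' i c"
    by (rule mm_cong) (use E i in auto)
  also have "\<dots> = mat_mul b0 g (mat_mul b1 D D') i c"
    by (simp add: mm_assoc)
  also have "\<dots> = mat_mul b0 g (\<lambda>_ _. 0) i c"
    by (rule mm_cong) (use DD c in auto)
  also have "\<dots> = 0" by (simp add: mat_mul_def)
  finally show "mat_mul a1 P (mat_mul b1 f D') i c = 0" .
qed

lemma bwd_step:
  assumes A: "\<forall>i<a0. \<forall>c<b1. mat_mul a1 P f i c = mat_mul b0 g D i c"
    and B: "\<forall>i<a1. \<forall>c<b1. f i c = mat_mul a2 P' h i c + mat_mul b0 h' D i c"
    and C: "\<forall>i<a0. \<forall>c<a2. mat_mul a1 P P' i c = 0"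
    and R: "ROW b1 b0 bm D0 D"
  shows "\<exists>h''. \<forall>i<a0. \<forall>c<b0. g i c = mat_mul a1 P h' i c + mat_mul bm h'' D0 i c"
proof -
  let ?Z = "\<lambda>i c. g i c - mat_mul a1 P h' i c"
  have "\<forall>i<a0. \<forall>c<b1. mat_mul b0 ?Z D i c = 0"
  proof (intro allI impI)
    fix i c assume i: "i < a0" and c: "c < b1"
    have "mat_mul b0 ?Z D i c = mat_mul b0 g D i c - mat_mul b0 (mat_mul a1 P h') D i c"
      by (simp add: mm_diff_left)
    also have "mat_mul b0 (mat_mul a1 P h') D i c = mat_mul a1 P (mat_mul b0 h' D) i c"
      by (simp add: mm_assoc)
    also have "mat_mul b0 g D i c = mat_mul a1 P f i c" using A i c by simp
    also have "mat_mul a1 P f i c = mat_mul a1 P (\<lambda>i c. mat_mul a2 P' h i c + mat_mul b0 h' D i c) i c"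
      by (rule mm_cong) (use B c in auto)
    also have "\<dots> = mat_mul a1 P (mat_mul a2 P' h) i c + mat_mul a1 P (mat_mul b0 h' D) i c"
      by (simp add: mm_add_right)
    also have "mat_mul a1 P (mat_mul a2 P' h) i c = mat_mul a2 (mat_mul a1 P P') h i c"
      by (simp add: mm_assoc)
    also have "\<dots> = mat_mul a2 (\<lambda>_ _. 0) h i c"
      by (rule mm_cong) (use C i in auto)
    also have "\<dots> = 0" by (simp add: mat_mul_def)
    finally show "mat_mul b0 ?Z D i c = 0" by simp
  qed
  from ROW_rows[OF R this] obtain H where H: "\<forall>r<a0. \<forall>l<b0. ?Z r l = mat_mul bm H D0 r l" by blast
  show ?thesis by (rule exI[of _ H]) (use H in \<open>auto simp: algebra_simps\<close>)
qed


lemma fwd_zero: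
  assumes E: "\<forall>i<a0. \<forall>c<b1. mat_mul a1 P f i c = mat_mul b0 g D i c"
    and DD: "\<forall>r<b0. \<forall>c<b2. mat_mul b1 D D' r c = 0"
    and i: "i < a0" and c: "c < b2"
  shows "mat_mul a1 P (mat_mul b1 f D') i c = 0"
proof -
  have "mat_mul a1 P (mat_mul b1 f D') i c = mat_mul b1 (mat_mul a1 P f) D' i c"
    by (simp add: mm_assoc)
  also have "\<dots> = mat_mul b1 (mat_mul b0 g D) D' i c"
    by (rule mm_cong) (use E i in auto)
  also have "\<dots> = mat_mul b0 g (mat_mul b1 D D') i c"
    by (simp add: mm_assoc)
  also have "\<dots> = mat_mul b0 g (\<lambda>_ _. 0) i c"
    by (rule mm_cong) (use DD c in auto)
  also have "\<dots> = 0" by (simp add: mat_mul_def)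
  finally show ?thesis .
qed

lemma chase:
  fixes n m :: "nat \<Rightarrow> nat" and D P :: "nat \<Rightarrow> nat \<Rightarrow> nat \<Rightarrow> 'a::comm_ring_1" and y :: "nat \<Rightarrow> 'a"
  assumes n0: "n 0 = 1"
    and GD: "\<And>i r c. 1 \<le> i \<Longrightarrow> i \<le> 4 \<Longrightarrow> r < n (i-1) \<Longrightarrow> c < n (Suc i) \<Longrightarrow> mat_mul (n i) (D i) (D (Suc i)) r c = 0"
    and R4: "m 4 > 0 \<Longrightarrow> ROW (n 5) (n 4) (n 3) (D 4) (D 5)"
    and R3: "ROW (n 4) (n 3) (n 2) (D 3) (D 4)"
    and R2: "ROW (n 3) (n 2) (n 1) (D 2) (D 3)"
    and R1: "ROW (n 2) (n 1) (n 0) (D 1) (D 2)"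
    and R0: "ROW (n 1) (n 0) 0 (D 0) (D 1)"
    and PP: "\<And>j r c. 1 \<le> j \<Longrightarrow> j \<le> 3 \<Longrightarrow> r < m (j-1) \<Longrightarrow> c < m (Suc j) \<Longrightarrow> mat_mul (m j) (P j) (P (Suc j)) r c = 0"
    and X1: "EXA (m 0) (m 1) (m 2) (P 1) (P 2)"
    and X2: "EXA (m 1) (m 2) (m 3) (P 2) (P 3)"
    and X3: "EXA (m 2) (m 3) (m 4) (P 3) (P 4)"
    and inj: "\<And>v. \<forall>i<m 3. mv (m 4) (P 4) v i = 0 \<Longrightarrow> \<forall>i<m 4. v i = 0"
    and hy: "\<forall>c<n 1. \<exists>x. \<forall>i<m 0. D 1 0 c * y i = mv (m 1) (P 1) x i"
  shows "\<exists>x. \<forall>i<m 0. y i = mv (m 1) (P 1) x i"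
proof -
  define f0 where "f0 = (\<lambda>(i::nat) (j::nat). y i)"
  have "\<forall>c\<in>{..<n 1}. \<exists>x. \<forall>i<m 0. D 1 0 c * y i = mv (m 1) (P 1) x i" using hy by auto
  then obtain xf where xf: "\<forall>c\<in>{..<n 1}. \<forall>i<m 0. D 1 0 c * y i = mv (m 1) (P 1) (xf c) i" by metis
  define f1 where "f1 = (\<lambda>l c. xf c l)"
  have E1: "\<forall>i<m 0. \<forall>c<n 1. mat_mul (m 1) (P 1) f1 i c = mat_mul (n 0) f0 (D 1) i c"
    using xf by (auto simp: n0 mm_one_dim f0_def f1_def mv_def mat_mul_def mult.commute)
  have G1: "\<forall>r<n 0. \<forall>c<n 2. mat_mul (n 1) (D 1) (D 2) r c = 0" using GD[of 1] by (auto simp: numeral_eq_Suc)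
  have G2: "\<forall>r<n 1. \<forall>c<n 3. mat_mul (n 2) (D 2) (D 3) r c = 0" using GD[of 2] by (auto simp: numeral_eq_Suc)
  have G3: "\<forall>r<n 2. \<forall>c<n 4. mat_mul (n 3) (D 3) (D 4) r c = 0" using GD[of 3] by (auto simp: numeral_eq_Suc)
  have G4: "\<forall>r<n 3. \<forall>c<n 5. mat_mul (n 4) (D 4) (D 5) r c = 0" using GD[of 4] by (auto simp: numeral_eq_Suc)
  have P1: "\<forall>i<m 0. \<forall>c<m 2. mat_mul (m 1) (P 1) (P 2) i c = 0" using PP[of 1] by (auto simp: numeral_eq_Suc)
  have P2: "\<forall>i<m 1. \<forall>c<m 3. mat_mul (m 2) (P 2) (P 3) i c = 0" using PP[of 2] by (auto simp: numeral_eq_Suc)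
  have P3: "\<forall>i<m 2. \<forall>c<m 4. mat_mul (m 3) (P 3) (P 4) i c = 0" using PP[of 3] by (auto simp: numeral_eq_Suc)
  obtain f2 where E2: "\<forall>i<m 1. \<forall>c<n 2. mat_mul (n 1) f1 (D 2) i c = mat_mul (m 2) (P 2) f2 i c"
    using fwd_step[OF E1 G1 X1] by blast
  have E2': "\<forall>i<m 1. \<forall>c<n 2. mat_mul (m 2) (P 2) f2 i c = mat_mul (n 1) f1 (D 2) i c" using E2 by simp
  obtain f3 where E3: "\<forall>i<m 2. \<forall>c<n 3. mat_mul (n 2) f2 (D 3) i c = mat_mul (m 3) (P 3) f3 i c"
    using fwd_step[OF E2' G2 X2] by blast
  have E3': "\<forall>i<m 2. \<forall>c<n 3. mat_mul (m 3) (P 3) f3 i c = mat_mul (n 2) f2 (D 3) i c" using E3 by simp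
  obtain f4 where E4: "\<forall>i<m 3. \<forall>c<n 4. mat_mul (n 3) f3 (D 4) i c = mat_mul (m 4) (P 4) f4 i c"
    using fwd_step[OF E3' G3 X3] by blast
  have E4': "\<forall>i<m 3. \<forall>c<n 4. mat_mul (m 4) (P 4) f4 i c = mat_mul (n 3) f3 (D 4) i c" using E4 by simp
  obtain h4 where B4: "\<forall>i<m 4. \<forall>c<n 4. f4 i c = mat_mul 0 (\<lambda>_ _. 0) (\<lambda>_ _. 0) i c + mat_mul (n 3) h4 (D 4) i c"
  proof (cases "m 4 = 0")
    case True then show ?thesis using that by auto
  next
    case False
    have Z: "\<forall>r<m 4. \<forall>c<n 5. mat_mul (n 4) f4 (D 5) r c = 0"
    proof (intro allI impI)
      fix r c assume r: "r < m 4" and c: "c < n 5"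
      have "\<forall>i<m 3. mv (m 4) (P 4) (\<lambda>t. mat_mul (n 4) f4 (D 5) t c) i = 0"
        using fwd_zero[OF E4' G4 _ c] by (simp add: mv_mm)
      from inj[OF this] r show "mat_mul (n 4) f4 (D 5) r c = 0" by simp
    qed
    from ROW_rows[OF R4 Z] False obtain H where "\<forall>r<m 4. \<forall>l<n 4. f4 r l = mat_mul (n 3) H (D 4) r l" by auto
    then show ?thesis using that[of H] by simp
  qed
  have C0: "\<forall>i<m 3. \<forall>c<(0::nat). mat_mul (m 4) (P 4) (\<lambda>_ _. 0) i c = 0" by simp
  obtain h3 where B3: "\<forall>i<m 3. \<forall>c<n 3. f3 i c = mat_mul (m 4) (P 4) h4 i c + mat_mul (n 2) h3 (D 3) i c"
    using bwd_step[OF E4' B4 C0 R3] by blast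
  obtain h2 where B2: "\<forall>i<m 2. \<forall>c<n 2. f2 i c = mat_mul (m 3) (P 3) h3 i c + mat_mul (n 1) h2 (D 2) i c"
    using bwd_step[OF E3' B3 P3 R2] by blast
  obtain h1 where B1: "\<forall>i<m 1. \<forall>c<n 1. f1 i c = mat_mul (m 2) (P 2) h2 i c + mat_mul (n 0) h1 (D 1) i c"
    using bwd_step[OF E2' B2 P2 R1] by blast
  obtain h0 where B0: "\<forall>i<m 0. \<forall>c<n 0. f0 i c = mat_mul (m 1) (P 1) h1 i c + mat_mul 0 h0 (D 0) i c"
    using bwd_step[OF E1 B1 P1 R0] by blast
  show ?thesis
  proof (rule exI[of _ "\<lambda>t. h1 t 0"], intro allI impI)
    fix i assume "i < m 0"
    then show "y i = mv (m 1) (P 1) (\<lambda>t. h1 t 0) i" using B0 by (simp add: n0 f0_def mv_mm)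
  qed
qed


definition uv :: "nat \<Rightarrow> nat \<Rightarrow> 'a::comm_ring_1" where
  "uv a = (\<lambda>i. if i = a then 1 else 0)"

lemma uv_vecs[simp]: "uv a \<in> vecs n \<longleftrightarrow> a < n"
  unfolding uv_def vecs_def by (auto dest: spec[of _ a])

lemma zero_vecs[simp]: "(\<lambda>_. 0) \<in> vecs n"
  by (simp add: vecs_def)

lemma smul_vecs[simp]: "u \<in> vecs n \<Longrightarrow> smul s u \<in> vecs n"
  by (simp add: vecs_def smul_def)

lemma add_vecs[simp]: "u \<in> vecs n \<Longrightarrow> v \<in> vecs n \<Longrightarrow> (\<lambda>i. u i + v i) \<in> vecs n"
  by (simp add: vecs_def)

lemma diff_vecs[simp]: "u \<in> vecs n \<Longrightarrow> v \<in> vecs n \<Longrightarrow> (\<lambda>i. u i - v i) \<in> vecs n"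
  by (simp add: vecs_def)

lemma trunc_le_vecs: "k \<le> n \<Longrightarrow> trunc k f \<in> vecs n"
  by (simp add: trunc_def vecs_def)

lemma trunc_id: "f \<in> vecs n \<Longrightarrow> trunc n f = f"
  by (auto simp: trunc_def vecs_def)

lemma lin_expand:
  fixes \<phi> :: "(nat \<Rightarrow> 'a::comm_ring_1) \<Rightarrow> 'a"
  assumes add: "\<forall>u\<in>vecs n. \<forall>v\<in>vecs n. \<phi> (\<lambda>i. u i + v i) = \<phi> u + \<phi> v"
    and hom: "\<forall>s. \<forall>u\<in>vecs n. \<phi> (smul s u) = s * \<phi> u"
    and f: "f \<in> vecs n"
  shows "\<phi> f = (\<Sum>b<n. f b * \<phi> (uv b))"
proof -
  have "k \<le> n \<Longrightarrow> \<phi> (trunc k f) = (\<Sum>b<k. f b * \<phi> (uv b))" for k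
  proof (induction k)
    case 0
    have "trunc 0 f = smul 0 (\<lambda>_. 0::'a)" by (simp add: trunc_def smul_def)
    then show ?case using hom by simp
  next
    case (Suc k)
    have "trunc (Suc k) f = (\<lambda>i. trunc k f i + smul (f k) (uv k) i)"
      by (auto simp: trunc_def smul_def uv_def fun_eq_iff less_Suc_eq)
    moreover have "trunc k f \<in> vecs n" using Suc.prems by (simp add: trunc_le_vecs)
    moreover have "smul (f k) (uv k) \<in> vecs n" using Suc.prems by simp
    ultimately have "\<phi> (trunc (Suc k) f) = \<phi> (trunc k f) + \<phi> (smul (f k) (uv k))"
      using add by simp
    also have "\<dots> = (\<Sum>b<k. f b * \<phi> (uv b)) + f k * \<phi> (uv k)"
      using Suc hom by simp
    finally show ?case by simp
  qed
  from this[of n] show ?thesis using f by (simp add: trunc_id)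
qed

lemma bil_expand:
  assumes P: "bilinear_on a b c P" and e: "e \<in> vecs a" and f: "f \<in> vecs b"
  shows "P e f i = (\<Sum>x<a. \<Sum>y<b. e x * f y * P (uv x) (uv y) i)"
proof -
  from P have add1: "\<forall>u\<in>vecs a. \<forall>u'\<in>vecs a. \<forall>v\<in>vecs b. P (\<lambda>i. u i + u' i) v = (\<lambda>i. P u v i + P u' v i)"
    and add2: "\<forall>u\<in>vecs a. \<forall>v\<in>vecs b. \<forall>v'\<in>vecs b. P u (\<lambda>i. v i + v' i) = (\<lambda>i. P u v i + P u v' i)"
    and hom: "\<forall>s. \<forall>u\<in>vecs a. \<forall>v\<in>vecs b. P (smul s u) v = smul s (P u v) \<and> P u (smul s v) = smul s (P u v)"
    unfolding bilinear_on_def by blast+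
  have "P e f i = (\<Sum>y<b. f y * P e (uv y) i)"
    by (rule lin_expand[of b "\<lambda>v. P e v i"]) (use add2 hom e f in \<open>auto simp: smul_def\<close>)
  also have "\<dots> = (\<Sum>y<b. f y * (\<Sum>x<a. e x * P (uv x) (uv y) i))"
  proof (rule sum.cong[OF refl])
    fix y assume "y \<in> {..<b}"
    then have "P e (uv y) i = (\<Sum>x<a. e x * P (uv x) (uv y) i)"
      by (intro lin_expand[of a "\<lambda>u. P u (uv y) i"]) (use add1 hom e in \<open>auto simp: smul_def\<close>)
    then show "f y * P e (uv y) i = f y * (\<Sum>x<a. e x * P (uv x) (uv y) i)" by simp
  qed
  also have "\<dots> = (\<Sum>y<b. \<Sum>x<a. e x * f y * P (uv x) (uv y) i)"
    by (simp add: sum_distrib_left mult.left_commute mult.assoc)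
  also have "\<dots> = (\<Sum>x<a. \<Sum>y<b. e x * f y * P (uv x) (uv y) i)"
    by (rule sum.swap)
  finally show ?thesis .
qed

lemma lin_form_add: "lin_form m w (\<lambda>i. u i + v i) = lin_form m w u + lin_form m w v"
  by (simp add: lin_form_def distrib_left sum.distrib)

lemma lin_form_smul: "lin_form m w (smul s u) = s * lin_form m w u"
  by (simp add: lin_form_def smul_def sum_distrib_left mult.left_commute)

lemma lin_form_uv: "c < m \<Longrightarrow> lin_form m w (uv c) = w c"
  by (simp add: lin_form_def uv_def)

lemma mat_app_add: "mat_app k m M (\<lambda>i. u i + v i) = (\<lambda>i. mat_app k m M u i + mat_app k m M v i)"
  by (auto simp: mat_app_def distrib_left sum.distrib)

lemma mat_app_diff: "mat_app k m M (\<lambda>i. u i - v i) = (\<lambda>i. mat_app k m M u i - mat_app k m M v i)"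
  by (auto simp: mat_app_def right_diff_distrib sum_subtractf)

lemma mat_app_smul: "mat_app k m M (smul s u) = smul s (mat_app k m M u)"
  by (auto simp: mat_app_def smul_def sum_distrib_left mult.left_commute)

lemma mat_app_uv: "mat_app k m M (uv c) = (\<lambda>r. if r < k \<and> c < m then M r c else 0)"
  by (auto simp: mat_app_def uv_def)

lemma ROW_from_sub:
  assumes "mker k m (tr Dn1) \<subseteq> mimg m m' (tr Dn)"
  shows "ROW k m m' Dn Dn1"
  unfolding ROW_def
proof (intro allI impI)
  fix v assume h: "\<forall>c<k. (\<Sum>l<m. v l * Dn1 l c) = 0"
  have "trunc m v \<in> mker k m (tr Dn1)"
  proof -
    have "mat_app k m (tr Dn1) (trunc m v) = (\<lambda>r. if r < k then mv m (tr Dn1) v r else 0)"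
      by (simp only: mat_app_mv mv_trunc)
    also have "\<dots> = (\<lambda>_. 0)" using h by (auto simp: mv_def tr_def mult.commute fun_eq_iff)
    finally show ?thesis by (simp add: mker_def)
  qed
  then have "trunc m v \<in> mimg m m' (tr Dn)" using assms by blast
  then obtain w where w: "trunc m v = mat_app m m' (tr Dn) w" by (auto simp: mimg_def)
  show "\<exists>w. \<forall>l<m. v l = (\<Sum>r<m'. w r * Dn r l)"
  proof (intro exI allI impI)
    fix l assume "l < m"
    then show "v l = (\<Sum>r<m'. w r * Dn r l)" using fun_cong[OF w, of l]
      by (simp add: trunc_def mat_app_def tr_def mult.commute)
  qed
qed

lemma ROW0_from_sub:
  assumes "mker k m (tr Dn1) \<subseteq> {\<lambda>_. 0}"
  shows "ROW k m 0 Dn Dn1"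
  unfolding ROW_def
proof (intro allI impI)
  fix v assume h: "\<forall>c<k. (\<Sum>l<m. v l * Dn1 l c) = 0"
  have "trunc m v \<in> mker k m (tr Dn1)"
  proof -
    have "mat_app k m (tr Dn1) (trunc m v) = (\<lambda>r. if r < k then mv m (tr Dn1) v r else 0)"
      by (simp only: mat_app_mv mv_trunc)
    also have "\<dots> = (\<lambda>_. 0)" using h by (auto simp: mv_def tr_def mult.commute fun_eq_iff)
    finally show ?thesis by (simp add: mker_def)
  qed
  then have "trunc m v = (\<lambda>_. 0)" using assms by blast
  then show "\<exists>w. \<forall>l<m. v l = (\<Sum>r<0. w r * Dn r l)"
    by (auto simp: trunc_def fun_eq_iff) (metis)
qed


lemma sum_uv: "(\<Sum>x<(n::nat). uv a x * g x) = (if a < n then g a else (0::'a::comm_ring_1))"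
proof -
  have "(\<Sum>x<n. uv a x * g x) = (\<Sum>x<n. if x = a then g x else 0)"
    by (rule sum.cong) (auto simp: uv_def)
  also have "\<dots> = (if a < n then g a else 0)" by (induct n) auto
  finally show ?thesis .
qed

lemma sum_uv2: "(\<Sum>x<(n::nat). g x * uv a x) = (if a < n then g a else (0::'a::comm_ring_1))"
  using sum_uv[of a g n] by (simp add: mult.commute)

lemma mm_scal_id_right: "c < n \<Longrightarrow> mat_mul n M (\<lambda>i c. r * id_mat i c) i c = M i c * r"
proof -
  assume c: "c < n"
  have "mat_mul n M (\<lambda>i c. r * id_mat i c) i c = (\<Sum>l<n. (M i l * r) * uv c l)"
    unfolding mat_mul_def by (rule sum.cong) (auto simp: id_mat_def uv_def)
  also have "\<dots> = M i c * r" using c by (simp add: sum_uv2)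
  finally show ?thesis .
qed

lemma mm_scal_id_left: "i < n \<Longrightarrow> mat_mul n (\<lambda>i c. r * id_mat i c) M i c = r * M i c"
proof -
  assume i: "i < n"
  have "mat_mul n (\<lambda>i c. r * id_mat i c) M i c = (\<Sum>l<n. uv i l * (r * M l c))"
    unfolding mat_mul_def by (rule sum.cong) (auto simp: id_mat_def uv_def)
  also have "\<dots> = r * M i c" using i by (simp add: sum_uv)
  finally show ?thesis .
qed

lemma sum_uv_outer:
  "(\<Sum>x<(n::nat). \<Sum>y<(m::nat). uv a x * h y * g x y) = (if a < n then (\<Sum>y<m. h y * g a y) else (0::'a::comm_ring_1))"
proof -
  have "(\<Sum>x<n. \<Sum>y<m. uv a x * h y * g x y) = (\<Sum>x<n. uv a x * (\<Sum>y<m. h y * g x y))"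
    by (rule sum.cong[OF refl]) (simp add: sum_distrib_left mult.assoc)
  then show ?thesis by (simp add: sum_uv)
qed

lemma sum_uv_mid:
  "(\<Sum>y<(m::nat). c * uv b y * g y) = (if b < m then c * g b else (0::'a::comm_ring_1))"
proof -
  have "(\<Sum>y<m. c * uv b y * g y) = (\<Sum>y<m. uv b y * (c * g y))"
    by (rule sum.cong[OF refl]) (simp add: ac_simps)
  then show ?thesis by (simp add: sum_uv)
qed

lemma sum_triple_swap:
  fixes w :: "nat \<Rightarrow> 'a::comm_ring_1"
  shows "(\<Sum>l<L. w l * (\<Sum>x<X. \<Sum>y<Y. c x y * B x y l)) = (\<Sum>x<(X::nat). \<Sum>y<(Y::nat). c x y * (\<Sum>l<(L::nat). w l * B x y l))"
proof -
  have "(\<Sum>l<L. w l * (\<Sum>x<X. \<Sum>y<Y. c x y * B x y l)) = (\<Sum>l<L. \<Sum>x<X. \<Sum>y<Y. c x y * (w l * B x y l))"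
    by (simp add: sum_distrib_left mult.left_commute)
  also have "\<dots> = (\<Sum>x<X. \<Sum>l<L. \<Sum>y<Y. c x y * (w l * B x y l))"
    by (rule sum.swap)
  also have "\<dots> = (\<Sum>x<X. \<Sum>y<Y. \<Sum>l<L. c x y * (w l * B x y l))"
    by (rule sum.cong[OF refl]) (rule sum.swap)
  also have "\<dots> = (\<Sum>x<X. \<Sum>y<Y. c x y * (\<Sum>l<L. w l * B x y l))"
    by (simp add: sum_distrib_left)
  finally show ?thesis .
qed

locale Asetup =
  fixes p q :: nat
    and D1 D2 D3 :: "nat \<Rightarrow> nat \<Rightarrow> 'a::comm_ring_1"
    and m11 m12 :: "(nat \<Rightarrow> 'a) \<Rightarrow> (nat \<Rightarrow> 'a) \<Rightarrow> (nat \<Rightarrow> 'a)"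
    and Iota Kap :: "nat \<Rightarrow> nat \<Rightarrow> 'a" and Lv Eta :: "nat \<Rightarrow> 'a"
  assumes p1: "p \<ge> 1" and q3: "q \<ge> 3"
    and acyc: "acyclic_A p q D1 D2 D3"
    and dacyc: "dual_acyclic_A p q D1 D2 D3"
    and dga: "dga_structure p q D1 D2 D3 m11 m12"
    and dec: "decomposition q Iota Lv Kap Eta"
begin

lemma acyc1: "mker 1 (p + 2) D1 = mimg (p + 2) (p + q) D2" using acyc by (simp add: acyclic_A_def)
lemma acyc2: "mker (p + 2) (p + q) D2 = mimg (p + q) (q - 1) D3" using acyc by (simp add: acyclic_A_def)
lemma acyc3: "mker (p + q) (q - 1) D3 = {\<lambda>_. 0}" using acyc by (simp add: acyclic_A_def)

lemma A1: "EXA 1 (p + 2) (p + q) D1 D2" by (rule EXA_from_eq[OF acyc1])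
lemma A2: "EXA (p + 2) (p + q) (q - 1) D2 D3" by (rule EXA_from_eq[OF acyc2])

lemma A3inj_vec: "v \<in> vecs (q - 1) \<Longrightarrow> mat_app (p + q) (q - 1) D3 v = (\<lambda>_. 0) \<Longrightarrow> v = (\<lambda>_. 0)"
  using acyc3 by (auto simp: mker_def)

lemma A3inj: "\<forall>i<p + q. mv (q - 1) D3 v i = 0 \<Longrightarrow> \<forall>i<q - 1. v i = 0"
proof -
  assume h: "\<forall>i<p + q. mv (q - 1) D3 v i = 0"
  have "mat_app (p + q) (q - 1) D3 (trunc (q - 1) v) = (\<lambda>r. if r < p + q then mv (q - 1) D3 v r else 0)"
    by (simp only: mat_app_mv mv_trunc)
  also have "\<dots> = (\<lambda>_. 0)" using h by auto
  finally have "trunc (q - 1) v = (\<lambda>_. 0)" by (rule A3inj_vec[rotated]) auto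
  then show "\<forall>i<q - 1. v i = 0" by (auto simp: trunc_def fun_eq_iff) (metis)
qed

lemma C12: "c < p + q \<Longrightarrow> mat_mul (p + 2) D1 D2 0 c = 0"
  by (rule complex_from_eq[of _ _ D2 1]) (use acyc1 in auto)

lemma C23: "r < p + 2 \<Longrightarrow> c < q - 1 \<Longrightarrow> mat_mul (p + q) D2 D3 r c = 0"
  by (rule complex_from_eq[of _ _ D3 "p + 2"]) (use acyc2 in auto)

lemma d2d3_vec: "mat_app (p + 2) (p + q) D2 (mat_app (p + q) (q - 1) D3 x) = (\<lambda>_. 0)"
proof -
  have "mat_app (p + q) (q - 1) D3 (trunc (q - 1) x) \<in> mker (p + 2) (p + q) D2"
    using acyc2 by (auto simp: mimg_def)
  moreover have "mat_app (p + q) (q - 1) D3 (trunc (q - 1) x) = mat_app (p + q) (q - 1) D3 x"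
    by (simp only: mat_app_mv mv_trunc)
  ultimately show ?thesis by (simp add: mker_def)
qed

lemma d1d2_vec: "mat_app 1 (p + 2) D1 (mat_app (p + 2) (p + q) D2 f) = (\<lambda>_. 0)"
proof -
  have "mat_app (p + 2) (p + q) D2 (trunc (p + q) f) \<in> mker 1 (p + 2) D1"
    using acyc1 by (auto simp: mimg_def)
  moreover have "mat_app (p + 2) (p + q) D2 (trunc (p + q) f) = mat_app (p + 2) (p + q) D2 f"
    by (simp only: mat_app_mv mv_trunc)
  ultimately show ?thesis by (simp add: mker_def)
qed

lemma R0: "ROW (p + 2) 1 0 X D1"
  by (rule ROW0_from_sub) (use dacyc in \<open>simp add: dual_acyclic_A_def\<close>)
lemma R1: "ROW (p + q) (p + 2) 1 D1 D2"
  by (rule ROW_from_sub) (use dacyc in \<open>simp add: dual_acyclic_A_def\<close>)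
lemma R2: "ROW (q - 1) (p + q) (p + 2) D2 D3"
  by (rule ROW_from_sub) (use dacyc in \<open>simp add: dual_acyclic_A_def\<close>)

lemma bil11: "bilinear_on (p + 2) (p + 2) (p + q) m11" using dga unfolding dga_structure_def by blast
lemma bil12: "bilinear_on (p + 2) (p + q) (q - 1) m12" using dga unfolding dga_structure_def by blast

lemma m12_vecs: "e \<in> vecs (p + 2) \<Longrightarrow> f \<in> vecs (p + q) \<Longrightarrow> m12 e f \<in> vecs (q - 1)"
  using bil12 by (simp add: bilinear_on_def)

lemma m11_zero: "e \<in> vecs (p + 2) \<Longrightarrow> m11 (\<lambda>_. 0) e = (\<lambda>_. 0)"
proof -
  assume e: "e \<in> vecs (p + 2)"
  have "\<forall>s. \<forall>u\<in>vecs (p + 2). \<forall>v\<in>vecs (p + 2). m11 (smul s u) v = smul s (m11 u v) \<and> m11 u (smul s v) = smul s (m11 u v)"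
    using bil11 unfolding bilinear_on_def by blast
  then have "m11 (smul 0 (\<lambda>_. 0)) e = smul 0 (m11 (\<lambda>_. 0) e)"
    using e zero_vecs by blast
  moreover have "smul 0 (\<lambda>_. 0::'a) = (\<lambda>_. 0)" by (simp add: smul_def)
  ultimately show ?thesis by (simp add: smul_def)
qed

lemma leib2: "e \<in> vecs (p + 2) \<Longrightarrow> f \<in> vecs (p + q) \<Longrightarrow>
  mat_app (p + q) (q - 1) D3 (m12 e f) = (\<lambda>i. mat_app 1 (p + 2) D1 e 0 * f i + m11 (mat_app (p + 2) (p + q) D2 f) e i)"
  using dga unfolding dga_structure_def by blast

lemma m11_anti: "e \<in> vecs (p + 2) \<Longrightarrow> e' \<in> vecs (p + 2) \<Longrightarrow> m11 e e' = (\<lambda>i. - m11 e' e i)"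
  using dga unfolding dga_structure_def by blast

lemma m12_d3:
  assumes e: "e \<in> vecs (p + 2)" and x: "x \<in> vecs (q - 1)"
  shows "m12 e (mat_app (p + q) (q - 1) D3 x) = smul (mat_app 1 (p + 2) D1 e 0) x"
proof -
  let ?f = "mat_app (p + q) (q - 1) D3 x"
  let ?s = "mat_app 1 (p + 2) D1 e 0"
  have "mat_app (p + q) (q - 1) D3 (m12 e ?f) = (\<lambda>i. ?s * ?f i + m11 (\<lambda>_. 0) e i)"
    using leib2[OF e mat_app_vecs] d2d3_vec by simp
  also have "\<dots> = smul ?s ?f" using m11_zero[OF e] by (simp add: smul_def)
  also have "\<dots> = mat_app (p + q) (q - 1) D3 (smul ?s x)" by (simp add: mat_app_smul)
  finally have eq: "mat_app (p + q) (q - 1) D3 (m12 e ?f) = mat_app (p + q) (q - 1) D3 (smul ?s x)" .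
  have "mat_app (p + q) (q - 1) D3 (\<lambda>i. m12 e ?f i - smul ?s x i) = (\<lambda>_. 0)"
    unfolding mat_app_diff eq by simp
  then have "(\<lambda>i. m12 e ?f i - smul ?s x i) = (\<lambda>_. 0)"
    by (rule A3inj_vec[rotated]) (use m12_vecs[OF e mat_app_vecs] x in simp)
  then show ?thesis by (auto simp: fun_eq_iff)
qed

definition T :: "nat \<Rightarrow> nat \<Rightarrow> 'a" where
  "T x y = lin_form (q - 1) Eta (m12 (uv x) (uv y))"

lemma eta_m12:
  assumes e: "e \<in> vecs (p + 2)" and f: "f \<in> vecs (p + q)"
  shows "lin_form (q - 1) Eta (m12 e f) = (\<Sum>x<p + 2. \<Sum>y<p + q. e x * f y * T x y)"
proof -
  have m: "\<And>l. m12 e f l = (\<Sum>x<p + 2. \<Sum>y<p + q. (e x * f y) * m12 (uv x) (uv y) l)"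
    by (rule bil_expand[OF bil12 e f])
  have "lin_form (q - 1) Eta (m12 e f) = (\<Sum>l<q - 1. Eta l * (\<Sum>x<p + 2. \<Sum>y<p + q. (e x * f y) * m12 (uv x) (uv y) l))"
    unfolding lin_form_def m ..
  also have "\<dots> = (\<Sum>x<p + 2. \<Sum>y<p + q. (e x * f y) * (\<Sum>l<q - 1. Eta l * m12 (uv x) (uv y) l))"
    by (rule sum_triple_swap)
  also have "\<dots> = (\<Sum>x<p + 2. \<Sum>y<p + q. e x * f y * T x y)"
    unfolding T_def lin_form_def ..
  finally show ?thesis .
qed

lemma TD3: "a < p + 2 \<Longrightarrow> c < q - 1 \<Longrightarrow> mat_mul (p + q) T D3 a c = D1 0 a * Eta c"
proof -
  assume a: "a < p + 2" and c: "c < q - 1"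
  let ?f = "mat_app (p + q) (q - 1) D3 (uv c)"
  have "lin_form (q - 1) Eta (m12 (uv a) ?f) = (\<Sum>x<p + 2. \<Sum>y<p + q. uv a x * ?f y * T x y)"
    using eta_m12[of "uv a" ?f] a by simp
  also have "\<dots> = (\<Sum>y<p + q. ?f y * T a y)" using a by (simp only: sum_uv_outer if_True)
  also have "\<dots> = mat_mul (p + q) T D3 a c"
    unfolding mat_mul_def by (rule sum.cong) (use c in \<open>auto simp: mat_app_uv\<close>)
  finally have 1: "lin_form (q - 1) Eta (m12 (uv a) ?f) = mat_mul (p + q) T D3 a c" .
  have "m12 (uv a) ?f = smul (mat_app 1 (p + 2) D1 (uv a) 0) (uv c)"
    by (rule m12_d3) (use a c in simp_all)
  then have "lin_form (q - 1) Eta (m12 (uv a) ?f) = lin_form (q - 1) Eta (smul (mat_app 1 (p + 2) D1 (uv a) 0) (uv c))"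
    by (simp only:)
  also have "\<dots> = D1 0 a * Eta c" using a c by (simp add: lin_form_smul lin_form_uv mat_app_uv)
  finally show ?thesis using 1 by simp
qed

lemma Tsym:
  assumes b: "b < p + q" and b': "b' < p + q"
  shows "(\<Sum>a<p + 2. D2 a b * T a b') + (\<Sum>a<p + 2. D2 a b' * T a b) = 0"
proof -
  let ?u = "mat_app (p + 2) (p + q) D2 (uv b)" and ?u' = "mat_app (p + 2) (p + q) D2 (uv b')"
  have u: "?u \<in> vecs (p + 2)" and u': "?u' \<in> vecs (p + 2)" by simp_all
  have z: "mat_app 1 (p + 2) D1 ?u 0 = 0" "mat_app 1 (p + 2) D1 ?u' 0 = 0"
    using fun_cong[OF d1d2_vec[of "uv b"], of 0] fun_cong[OF d1d2_vec[of "uv b'"], of 0] by simp_all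
  have e1: "mat_app (p + q) (q - 1) D3 (m12 ?u (uv b')) = m11 ?u' ?u"
    using leib2[OF u, of "uv b'"] b' z by (simp add: fun_eq_iff)
  have e2: "mat_app (p + q) (q - 1) D3 (m12 ?u' (uv b)) = m11 ?u ?u'"
    using leib2[OF u', of "uv b"] b z by (simp add: fun_eq_iff)
  have "mat_app (p + q) (q - 1) D3 (\<lambda>i. m12 ?u (uv b') i + m12 ?u' (uv b) i) = (\<lambda>_. 0)"
    unfolding mat_app_add e1 e2 using m11_anti[OF u u'] by (simp add: fun_eq_iff)
  then have g0: "(\<lambda>i. m12 ?u (uv b') i + m12 ?u' (uv b) i) = (\<lambda>_. 0)"
    by (rule A3inj_vec[rotated]) (use m12_vecs u u' b b' in simp)
  have "lin_form (q - 1) Eta (m12 ?u (uv b')) + lin_form (q - 1) Eta (m12 ?u' (uv b)) = 0"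
    using arg_cong[OF g0, of "lin_form (q - 1) Eta"] by (simp add: lin_form_add lin_form_def)
  moreover have "lin_form (q - 1) Eta (m12 ?u (uv b')) = (\<Sum>a<p + 2. D2 a b * T a b')"
  proof -
    have "lin_form (q - 1) Eta (m12 ?u (uv b')) = (\<Sum>x<p + 2. \<Sum>y<p + q. ?u x * uv b' y * T x y)"
      using eta_m12[OF u, of "uv b'"] b' by simp
    also have "\<dots> = (\<Sum>x<p + 2. ?u x * T x b')"
      by (rule sum.cong[OF refl]) (use b' in \<open>simp only: sum_uv_mid if_True\<close>)
    also have "\<dots> = (\<Sum>a<p + 2. D2 a b * T a b')"
      by (rule sum.cong[OF refl]) (use b in \<open>simp add: mat_app_uv\<close>)
    finally show ?thesis .
  qed
  moreover have "lin_form (q - 1) Eta (m12 ?u' (uv b)) = (\<Sum>a<p + 2. D2 a b' * T a b)"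
  proof -
    have "lin_form (q - 1) Eta (m12 ?u' (uv b)) = (\<Sum>x<p + 2. \<Sum>y<p + q. ?u' x * uv b y * T x y)"
      using eta_m12[OF u', of "uv b"] b by simp
    also have "\<dots> = (\<Sum>x<p + 2. ?u' x * T x b)"
      by (rule sum.cong[OF refl]) (use b in \<open>simp only: sum_uv_mid if_True\<close>)
    also have "\<dots> = (\<Sum>a<p + 2. D2 a b' * T a b)"
      by (rule sum.cong[OF refl]) (use b' in \<open>simp add: mat_app_uv\<close>)
    finally show ?thesis .
  qed
  ultimately show ?thesis by simp
qed

lemma faithful:
  assumes H: "\<forall>i<q - 1. \<forall>c<q - 1. r * id_mat i c = mat_mul (p + q) H3 D3 i c"
  shows "\<exists>x. r = (\<Sum>a<p + 2. D1 0 a * x a)"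
proof -
  define f3 where "f3 = (\<lambda>i c. r * id_mat i c)"
  have A3: "\<forall>i<p + q. \<forall>c<q - 1. mat_mul (q - 1) D3 f3 i c = mat_mul (p + q) f3 D3 i c"
    by (simp add: f3_def mm_scal_id_right mm_scal_id_left mult.commute)
  have B3: "\<forall>i<q - 1. \<forall>c<q - 1. f3 i c = mat_mul 0 (\<lambda>_ _. 0) (\<lambda>_ _. 0) i c + mat_mul (p + q) H3 D3 i c"
    using H by (simp add: f3_def)
  have C3: "\<forall>i<p + q. \<forall>c<(0::nat). mat_mul (q - 1) D3 (\<lambda>_ _. 0) i c = 0" by simp
  obtain h2 where B2: "\<forall>i<p + q. \<forall>c<p + q. f3 i c = mat_mul (q - 1) D3 H3 i c + mat_mul (p + 2) h2 D2 i c"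
    using bwd_step[OF A3 B3 C3 R2] by blast
  have A2': "\<forall>i<p + 2. \<forall>c<p + q. mat_mul (p + q) D2 f3 i c = mat_mul (p + 2) f3 D2 i c"
    by (simp add: f3_def mm_scal_id_right mm_scal_id_left mult.commute)
  have C2: "\<forall>i<p + 2. \<forall>c<q - 1. mat_mul (p + q) D2 D3 i c = 0" using C23 by blast
  obtain h1 where B1: "\<forall>i<p + 2. \<forall>c<p + 2. f3 i c = mat_mul (p + q) D2 h2 i c + mat_mul 1 h1 D1 i c"
    using bwd_step[OF A2' B2 C2 R1] by blast
  have A1': "\<forall>i<1. \<forall>c<p + 2. mat_mul (p + 2) D1 f3 i c = mat_mul 1 (\<lambda>_ _. r) D1 i c"
    by (simp add: f3_def mm_scal_id_right mm_one_dim mult.commute)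
  have C1: "\<forall>i<1. \<forall>c<p + q. mat_mul (p + 2) D1 D2 i c = 0" using C12 by auto
  obtain h0 where B0: "\<forall>i<1. \<forall>c<1. r = mat_mul (p + 2) D1 h1 i c + mat_mul 0 h0 (\<lambda>_ _. 0) i c"
    using bwd_step[OF A1' B1 C1 R0] by blast
  show ?thesis using B0 by (auto simp: mat_mul_def intro!: exI[of _ "\<lambda>a. h1 a 0"])
qed

end


definition vm :: "nat \<Rightarrow> (nat \<Rightarrow> 'a::comm_ring_1) \<Rightarrow> (nat \<Rightarrow> nat \<Rightarrow> 'a) \<Rightarrow> (nat \<Rightarrow> 'a)" where
  "vm n v M = (\<lambda>j. \<Sum>b<n. v b * M b j)"

lemma mv_assoc: "mv a A (mv b B v) i = mv b (mat_mul a A B) v i"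
  unfolding mv_def mat_mul_def
  by (simp add: sum_distrib_left sum_distrib_right mult.assoc sum.swap[of _ "{..<a}"])

lemma vm_assoc: "vm b (vm a v A) B j = vm a v (mat_mul b A B) j"
  unfolding vm_def mat_mul_def
  by (simp add: sum_distrib_left sum_distrib_right mult.assoc sum.swap[of _ "{..<a}"])

lemma vm_cong: "(\<And>b. b < n \<Longrightarrow> v b = v' b) \<Longrightarrow> vm n v M j = vm n v' M j"
  unfolding vm_def by (rule sum.cong) auto

lemma vm_cong_mat: "(\<And>b. b < n \<Longrightarrow> M b j = M' b j) \<Longrightarrow> vm n v M j = vm n v M' j"
  unfolding vm_def by (rule sum.cong) auto

lemma mv_cong_mat: "(\<And>b. b < n \<Longrightarrow> M i b = M' i b) \<Longrightarrow> mv n M v i = mv n M' v i"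
  unfolding mv_def by (rule sum.cong) auto

lemma vm_add: "vm n (\<lambda>b. u b + v b) M j = vm n u M j + vm n v M j"
  unfolding vm_def by (simp add: distrib_right sum.distrib)

lemma vm_diff: "vm n (\<lambda>b. u b - v b) M j = vm n u M j - vm n v M j"
  unfolding vm_def by (simp add: left_diff_distrib sum_subtractf)

lemma mv_add: "mv n M (\<lambda>b. u b + v b) j = mv n M u j + mv n M v j"
  unfolding mv_def by (simp add: distrib_left sum.distrib)

lemma vm_zero: "(\<And>b. b < n \<Longrightarrow> v b = 0) \<Longrightarrow> vm n v M j = 0"
  unfolding vm_def by (rule sum.neutral) auto

lemma mv_zero_mat: "(\<And>b. b < n \<Longrightarrow> M i b = 0) \<Longrightarrow> mv n M v i = 0"
  unfolding mv_def by (rule sum.neutral) auto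

lemma vm_zero_mat: "(\<And>b. b < n \<Longrightarrow> M b j = 0) \<Longrightarrow> vm n v M j = 0"
  unfolding vm_def by (rule sum.neutral) auto

lemma sum_split: "(\<Sum>i<a + b. g i) = (\<Sum>i<(a::nat). g i) + (\<Sum>i<b. g (a + i))"
  by (induct b) (auto simp: ac_simps)

lemma swap2: "(\<Sum>a<(n::nat). (\<Sum>b<(m::nat). A a b * f b) * B a) = (\<Sum>b<m. f b * (\<Sum>a<n. A a b * (B a::'a::comm_ring_1)))"
  by (simp add: sum_distrib_left sum_distrib_right sum.swap[of _ "{..<n}"] ac_simps)

lemma ROW0_any: "ROW k m 0 X Y \<Longrightarrow> ROW k m 0 X' Y"
  unfolding ROW_def by simp

locale Bmat =
  fixes n1 n2 n3 nc :: nat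
    and D1 D2 D3 T Iota Kap :: "nat \<Rightarrow> nat \<Rightarrow> 'a::comm_ring_1" and Lv Eta :: "nat \<Rightarrow> 'a"
  assumes A1: "EXA 1 n1 n2 D1 D2" and A2: "EXA n1 n2 n3 D2 D3"
    and A3inj: "\<And>v. \<forall>i<n2. mv n3 D3 v i = 0 \<Longrightarrow> \<forall>i<n3. v i = 0"
    and C12: "\<And>c. c < n2 \<Longrightarrow> mat_mul n1 D1 D2 0 c = 0"
    and C23: "\<And>r c. r < n1 \<Longrightarrow> c < n3 \<Longrightarrow> mat_mul n2 D2 D3 r c = 0"
    and R0: "ROW n1 1 0 (\<lambda>_ _. 0) D1" and R1: "ROW n2 n1 1 D1 D2" and R2: "ROW n3 n2 n1 D2 D3"
    and TD3: "\<And>a c. a < n1 \<Longrightarrow> c < n3 \<Longrightarrow> mat_mul n2 T D3 a c = D1 0 a * Eta c"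
    and Tsym: "\<And>b b'. b < n2 \<Longrightarrow> b' < n2 \<Longrightarrow> (\<Sum>a<n1. D2 a b * T a b') + (\<Sum>a<n1. D2 a b' * T a b) = 0"
    and KI: "\<And>i j. i < nc \<Longrightarrow> j < nc \<Longrightarrow> mat_mul n3 Kap Iota i j = id_mat i j"
    and EL: "(\<Sum>l<n3. Eta l * Lv l) = 1"
    and EI: "\<And>j. j < nc \<Longrightarrow> (\<Sum>l<n3. Eta l * Iota l j) = 0"
    and ID: "\<And>i j. i < n3 \<Longrightarrow> j < n3 \<Longrightarrow> mat_mul nc Iota Kap i j + Lv i * Eta j = id_mat i j"
    and faithful: "\<And>r H3. \<forall>i<n3. \<forall>c<n3. r * id_mat i c = mat_mul n2 H3 D3 i c \<Longrightarrow> \<exists>x. r = (\<Sum>a<n1. D1 0 a * x a)"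
begin

definition M :: "nat \<Rightarrow> nat \<Rightarrow> 'a" where "M = mat_mul n3 D3 Iota"
definition Q3 :: "nat \<Rightarrow> nat \<Rightarrow> 'a" where "Q3 i b = (if i < n1 then T i b else D2 (i - n1) b)"
definition Q2 :: "nat \<Rightarrow> nat \<Rightarrow> 'a" where "Q2 b i = (if i < n1 then D2 i b else T (i - n1) b)"

lemma decomp_vec: "l < n3 \<Longrightarrow> g l = vm nc (vm n3 g Iota) Kap l + (\<Sum>l'<n3. g l' * Lv l') * Eta l"
proof -
  assume l: "l < n3"
  have "g l = (\<Sum>l'<n3. g l' * id_mat l' l)"
    using l by (simp add: id_mat_def if_distrib[of "\<lambda>x. _ * x"] sum.delta' cong: if_cong)
  also have "\<dots> = (\<Sum>l'<n3. g l' * mat_mul nc Iota Kap l' l + g l' * Lv l' * Eta l)"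
    by (rule sum.cong[OF refl]) (subst ID[symmetric], use l in \<open>simp_all add: algebra_simps\<close>)
  also have "\<dots> = vm nc (vm n3 g Iota) Kap l + (\<Sum>l'<n3. g l' * Lv l') * Eta l"
    by (simp add: sum.distrib vm_assoc sum_distrib_right vm_def[of n3 g "mat_mul nc Iota Kap"])
  finally show ?thesis .
qed

lemma decomp_col: "l < n3 \<Longrightarrow> h l = mv nc Iota (mv n3 Kap h) l + Lv l * (\<Sum>l'<n3. Eta l' * h l')"
proof -
  assume l: "l < n3"
  have "h l = (\<Sum>l'<n3. id_mat l l' * h l')"
    using l by (simp add: id_mat_def if_distrib[of "\<lambda>x. x * _"] sum.delta cong: if_cong)
  also have "\<dots> = (\<Sum>l'<n3. mat_mul nc Iota Kap l l' * h l' + Lv l * (Eta l' * h l'))"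
    by (rule sum.cong[OF refl]) (subst ID[symmetric], use l in \<open>simp_all add: algebra_simps\<close>)
  also have "\<dots> = mv nc Iota (mv n3 Kap h) l + Lv l * (\<Sum>l'<n3. Eta l' * h l')"
    by (simp add: sum.distrib mv_assoc sum_distrib_left mv_def[of n3 "mat_mul nc Iota Kap"])
  finally show ?thesis .
qed

lemma TM: "a < n1 \<Longrightarrow> j < nc \<Longrightarrow> mat_mul n2 T M a j = 0"
proof -
  assume a: "a < n1" and j: "j < nc"
  have "mat_mul n2 T M a j = mat_mul n3 (mat_mul n2 T D3) Iota a j" by (simp add: M_def mm_assoc)
  also have "\<dots> = mat_mul n3 (\<lambda>a l. D1 0 a * Eta l) Iota a j" by (rule mm_cong) (use a TD3 in auto)
  also have "\<dots> = D1 0 a * (\<Sum>l<n3. Eta l * Iota l j)" by (simp add: mat_mul_def sum_distrib_left mult.assoc)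
  also have "\<dots> = 0" using EI[OF j] by simp
  finally show ?thesis .
qed

lemma D2M: "a < n1 \<Longrightarrow> j < nc \<Longrightarrow> mat_mul n2 D2 M a j = 0"
proof -
  assume a: "a < n1" and j: "j < nc"
  have "mat_mul n2 D2 M a j = mat_mul n3 (mat_mul n2 D2 D3) Iota a j" by (simp add: M_def mm_assoc)
  also have "\<dots> = mat_mul n3 (\<lambda>_ _. 0) Iota a j" by (rule mm_cong) (use a C23 in auto)
  also have "\<dots> = 0" by (simp add: mat_mul_def)
  finally show ?thesis .
qed

lemma BC43: "i < n1 + n1 \<Longrightarrow> j < nc \<Longrightarrow> mat_mul n2 Q3 M i j = 0"
proof -
  assume i: "i < n1 + n1" and j: "j < nc"
  show ?thesis
  proof (cases "i < n1")
    case True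
    have "mat_mul n2 Q3 M i j = mat_mul n2 T M i j" by (rule mm_cong) (use True in \<open>auto simp: Q3_def\<close>)
    then show ?thesis using TM[OF True j] by simp
  next
    case False
    have "mat_mul n2 Q3 M i j = mat_mul n2 D2 M (i - n1) j" unfolding mat_mul_def
      by (rule sum.cong) (use False in \<open>auto simp: Q3_def\<close>)
    then show ?thesis using D2M[OF _ j] i False by simp
  qed
qed

lemma BC32: "b < n2 \<Longrightarrow> b' < n2 \<Longrightarrow> mat_mul (n1 + n1) Q2 Q3 b b' = 0"
proof -
  assume b: "b < n2" and b': "b' < n2"
  have "mat_mul (n1 + n1) Q2 Q3 b b' = (\<Sum>a<n1. D2 a b * T a b') + (\<Sum>a<n1. T a b * D2 a b')"
    unfolding mat_mul_def sum_split by (simp add: Q2_def Q3_def)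
  also have "\<dots> = (\<Sum>a<n1. D2 a b * T a b') + (\<Sum>a<n1. D2 a b' * T a b)"
    by (simp add: mult.commute)
  also have "\<dots> = 0" by (rule Tsym[OF b b'])
  finally show ?thesis .
qed

lemma BC21: "j < nc \<Longrightarrow> i < n1 + n1 \<Longrightarrow> mat_mul n2 (tr M) Q2 j i = 0"
proof -
  assume j: "j < nc" and i: "i < n1 + n1"
  show ?thesis
  proof (cases "i < n1")
    case True
    have "mat_mul n2 (tr M) Q2 j i = mat_mul n2 D2 M i j"
      unfolding mat_mul_def tr_def by (rule sum.cong) (use True in \<open>auto simp: Q2_def mult.commute\<close>)
    then show ?thesis using D2M[OF True j] by simp
  next
    case False
    have "mat_mul n2 (tr M) Q2 j i = mat_mul n2 T M (i - n1) j"
      unfolding mat_mul_def tr_def by (rule sum.cong) (use False in \<open>auto simp: Q2_def mult.commute\<close>)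
    then show ?thesis using TM[OF _ j] i False by simp
  qed
qed

lemma B4inj: "\<forall>i<n2. mv nc M v i = 0 \<Longrightarrow> \<forall>i<nc. v i = 0"
proof -
  assume h: "\<forall>i<n2. mv nc M v i = 0"
  have "\<forall>i<n2. mv n3 D3 (mv nc Iota v) i = 0" using h by (simp add: mv_assoc M_def)
  from A3inj[OF this] have z: "\<forall>l<n3. mv nc Iota v l = 0" .
  show "\<forall>i<nc. v i = 0"
  proof (intro allI impI)
    fix i assume i: "i < nc"
    have "v i = (\<Sum>j<nc. id_mat i j * v j)"
      using i by (simp add: id_mat_def if_distrib[of "\<lambda>x. x * _"] sum.delta cong: if_cong)
    also have "\<dots> = mv nc (mat_mul n3 Kap Iota) v i"
      unfolding mv_def by (rule sum.cong) (use i KI in auto)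
    also have "\<dots> = mv n3 Kap (mv nc Iota v) i" by (simp add: mv_assoc)
    also have "\<dots> = 0" unfolding mv_def[of n3 Kap] by (rule sum.neutral) (use z in auto)
    finally show "v i = 0" .
  qed
qed

lemma B3: "EXA (n1 + n1) n2 nc Q3 M"
  unfolding EXA_def
proof (intro allI impI)
  fix v assume h: "\<forall>i<n1 + n1. mv n2 Q3 v i = 0"
  have hT: "\<forall>a<n1. mv n2 T v a = 0"
  proof (intro allI impI)
    fix a assume a: "a < n1"
    have "mv n2 T v a = mv n2 Q3 v a" by (rule mv_cong_mat) (use a in \<open>simp add: Q3_def\<close>)
    then show "mv n2 T v a = 0" using h a by simp
  qed
  have hD: "\<forall>a<n1. mv n2 D2 v a = 0"
  proof (intro allI impI)
    fix a assume a: "a < n1"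
    have "mv n2 D2 v a = mv n2 Q3 v (n1 + a)" unfolding mv_def by (rule sum.cong) (simp_all add: Q3_def)
    then show "mv n2 D2 v a = 0" using h a by simp
  qed
  obtain w where w: "\<forall>b<n2. v b = mv n3 D3 w b" using A2[unfolded EXA_def, rule_format, OF hD[rule_format]] by blast
  define s' where "s' = (\<Sum>l<n3. Eta l * w l)"
  have ann: "\<forall>a<n1. s' * D1 0 a = 0"
  proof (intro allI impI)
    fix a assume a: "a < n1"
    have "0 = mv n2 T v a" using hT a by simp
    also have "\<dots> = mv n2 T (mv n3 D3 w) a" by (rule arg_cong[of _ _ "\<lambda>x. x a"], rule mv_cong) (use w in auto)
    also have "\<dots> = mv n3 (mat_mul n2 T D3) w a" by (rule mv_assoc)
    also have "\<dots> = (\<Sum>l<n3. D1 0 a * Eta l * w l)" unfolding mv_def by (rule sum.cong) (use a TD3 in auto)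
    also have "\<dots> = s' * D1 0 a" by (simp add: s'_def sum_distrib_left sum_distrib_right ac_simps)
    finally show "s' * D1 0 a = 0" by simp
  qed
  have "s' = 0"
  proof -
    have "\<forall>c<n1. (\<Sum>l<1. (\<lambda>_. s') l * D1 l c) = 0" using ann by simp
    from R0[unfolded ROW_def, rule_format, of "\<lambda>_. s'", OF this[rule_format]] show ?thesis by simp
  qed
  have wI: "\<forall>l<n3. w l = mv nc Iota (mv n3 Kap w) l"
    using decomp_col[of _ w] \<open>s' = 0\<close> by (simp add: s'_def)
  show "\<exists>u. \<forall>i<n2. v i = mv nc M u i"
  proof (intro exI allI impI)
    fix i assume i: "i < n2"
    have "v i = mv n3 D3 w i" using w i by simp
    also have "\<dots> = mv n3 D3 (mv nc Iota (mv n3 Kap w)) i" by (rule arg_cong[of _ _ "\<lambda>x. x i"], rule mv_cong) (use wI in auto)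
    also have "\<dots> = mv nc M (mv n3 Kap w) i" by (simp add: mv_assoc M_def)
    finally show "v i = mv nc M (mv n3 Kap w) i" .
  qed
qed

lemma Q2_split: "mv (n1 + n1) Q2 x b = vm n1 x D2 b + vm n1 (\<lambda>a. x (n1 + a)) T b"
  unfolding mv_def vm_def sum_split by (simp add: Q2_def mult.commute)

lemma B2: "EXA n2 (n1 + n1) n2 Q2 Q3"
  unfolding EXA_def
proof (intro allI impI)
  fix x assume h: "\<forall>i<n2. mv (n1 + n1) Q2 x i = 0"
  define e where "e = (\<lambda>a. x (n1 + a))"
  have h': "\<forall>b<n2. vm n1 x D2 b + vm n1 e T b = 0" using h by (simp add: Q2_split e_def)
  define d where "d = (\<Sum>a<n1. D1 0 a * e a)"
  have dEta: "\<forall>l<n3. d * Eta l = 0"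
  proof (intro allI impI)
    fix l assume l: "l < n3"
    have "0 = vm n2 (\<lambda>b. vm n1 x D2 b + vm n1 e T b) D3 l" by (rule vm_zero[symmetric]) (use h' in auto)
    also have "\<dots> = vm n1 x (mat_mul n2 D2 D3) l + vm n1 e (mat_mul n2 T D3) l"
      by (simp add: vm_add vm_assoc)
    also have "vm n1 x (mat_mul n2 D2 D3) l = 0" by (rule vm_zero_mat) (use l C23 in auto)
    also have "vm n1 e (mat_mul n2 T D3) l = (\<Sum>a<n1. e a * (D1 0 a * Eta l))"
      unfolding vm_def by (rule sum.cong) (use l TD3 in auto)
    also have "\<dots> = d * Eta l" by (simp add: d_def sum_distrib_left sum_distrib_right ac_simps)
    finally show "d * Eta l = 0" by simp
  qed
  have "d = 0"
  proof -
    have "d = d * (\<Sum>l<n3. Eta l * Lv l)" using EL by simp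
    also have "\<dots> = (\<Sum>l<n3. (d * Eta l) * Lv l)" by (simp add: sum_distrib_left ac_simps)
    also have "\<dots> = 0" using dEta by simp
    finally show ?thesis .
  qed
  then have "\<forall>i<1. mv n1 D1 e i = 0" by (simp add: mv_def d_def)
  then obtain f1 where f1: "\<forall>a<n1. e a = mv n2 D2 f1 a" using A1[unfolded EXA_def, rule_format] by blast
  define ph where "ph = (\<lambda>a. x a - mv n2 T f1 a)"
  have phD: "\<forall>b<n2. (\<Sum>a<n1. ph a * D2 a b) = 0"
  proof (intro allI impI)
    fix b assume b: "b < n2"
    have e1: "vm n1 e T b = (\<Sum>b'<n2. f1 b' * (\<Sum>a<n1. D2 a b' * T a b))"
    proof -
      have "vm n1 e T b = (\<Sum>a<n1. (\<Sum>b'<n2. D2 a b' * f1 b') * T a b)"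
        unfolding vm_def by (rule sum.cong) (use f1 in \<open>auto simp: mv_def\<close>)
      then show ?thesis by (simp add: swap2)
    qed
    have e2: "vm n1 (mv n2 T f1) D2 b = (\<Sum>b'<n2. f1 b' * (\<Sum>a<n1. D2 a b * T a b'))"
    proof -
      have "vm n1 (mv n2 T f1) D2 b = (\<Sum>a<n1. (\<Sum>b'<n2. T a b' * f1 b') * D2 a b)"
        unfolding vm_def mv_def ..
      also have "\<dots> = (\<Sum>b'<n2. f1 b' * (\<Sum>a<n1. T a b' * D2 a b))" by (rule swap2)
      finally show ?thesis by (simp add: mult.commute)
    qed
    have "(\<Sum>a<n1. ph a * D2 a b) = vm n1 x D2 b - vm n1 (mv n2 T f1) D2 b"
      by (simp add: ph_def vm_def left_diff_distrib sum_subtractf)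
    also have "\<dots> = - vm n1 e T b - vm n1 (mv n2 T f1) D2 b" using h' b by (simp add: eq_neg_iff_add_eq_0)
    also have "\<dots> = - (\<Sum>b'<n2. f1 b' * ((\<Sum>a<n1. D2 a b' * T a b) + (\<Sum>a<n1. D2 a b * T a b')))"
      unfolding e1 e2 by (simp add: distrib_left sum.distrib)
    also have "\<dots> = - (\<Sum>b'<n2. f1 b' * 0)"
      by (intro arg_cong[of _ _ uminus] sum.cong refl) (use Tsym b in auto)
    also have "\<dots> = 0" by simp
    finally show "(\<Sum>a<n1. ph a * D2 a b) = 0" .
  qed
  obtain w0 where w0: "\<forall>a<n1. ph a = (\<Sum>r<1. w0 r * D1 r a)" using R1[unfolded ROW_def, rule_format, OF phD[rule_format]] by blast
  define f2 where "f2 = mv n3 D3 (\<lambda>l. w0 0 * Lv l)"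
  show "\<exists>f. \<forall>i<n1 + n1. x i = mv n2 Q3 f i"
  proof (intro exI allI impI)
    fix i assume i: "i < n1 + n1"
    show "x i = mv n2 Q3 (\<lambda>b. f1 b + f2 b) i"
    proof (cases "i < n1")
      case True
      have "mv n2 Q3 (\<lambda>b. f1 b + f2 b) i = mv n2 T (\<lambda>b. f1 b + f2 b) i"
        by (rule mv_cong_mat) (use True in \<open>simp add: Q3_def\<close>)
      also have "\<dots> = mv n2 T f1 i + mv n2 T f2 i" by (rule mv_add)
      also have "mv n2 T f2 i = mv n3 (mat_mul n2 T D3) (\<lambda>l. w0 0 * Lv l) i" by (simp add: f2_def mv_assoc)
      also have "\<dots> = (\<Sum>l<n3. D1 0 i * Eta l * (w0 0 * Lv l))"
        unfolding mv_def by (rule sum.cong) (use True TD3 in auto)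
      also have "\<dots> = D1 0 i * w0 0 * (\<Sum>l<n3. Eta l * Lv l)" by (simp add: sum_distrib_left ac_simps)
      also have "\<dots> = ph i" using w0 True EL by (simp add: mult.commute)
      finally show ?thesis by (simp add: ph_def)
    next
      case False
      define a where "a = i - n1"
      have a: "a < n1" "i = n1 + a" using i False by (auto simp: a_def)
      have "mv n2 Q3 (\<lambda>b. f1 b + f2 b) i = mv n2 D2 (\<lambda>b. f1 b + f2 b) a"
        unfolding mv_def by (rule sum.cong) (use a in \<open>simp_all add: Q3_def\<close>)
      also have "\<dots> = mv n2 D2 f1 a + mv n2 D2 f2 a" by (rule mv_add)
      also have "mv n2 D2 f2 a = mv n3 (mat_mul n2 D2 D3) (\<lambda>l. w0 0 * Lv l) a" by (simp add: f2_def mv_assoc)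
      also have "\<dots> = 0" by (rule mv_zero_mat) (use a C23 in auto)
      finally show ?thesis using f1 a by (simp add: e_def)
    qed
  qed
qed

lemma B1:
  assumes SI: "\<And>s \<psi>. \<forall>l<n3. s * Eta l = vm n2 \<psi> D3 l \<Longrightarrow> \<exists>e. s = (\<Sum>a<n1. D1 0 a * e a)"
  shows "EXA nc n2 (n1 + n1) (tr M) Q2"
  unfolding EXA_def
proof (intro allI impI)
  fix \<psi> assume h: "\<forall>j<nc. mv n2 (tr M) \<psi> j = 0"
  define w where "w = vm n2 \<psi> D3"
  define s where "s = (\<Sum>l<n3. w l * Lv l)"
  have wI: "\<forall>j<nc. vm n3 w Iota j = 0"
    using h by (simp add: w_def vm_assoc M_def[symmetric]) (simp add: vm_def mv_def tr_def mult.commute)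
  have ws: "\<forall>l<n3. s * Eta l = vm n2 \<psi> D3 l"
  proof (intro allI impI)
    fix l assume l: "l < n3"
    have "w l = vm nc (vm n3 w Iota) Kap l + s * Eta l" using decomp_vec[OF l, of w] by (simp add: s_def)
    also have "vm nc (vm n3 w Iota) Kap l = 0" by (rule vm_zero) (use wI in auto)
    finally show "s * Eta l = vm n2 \<psi> D3 l" by (simp add: w_def)
  qed
  obtain e where e: "s = (\<Sum>a<n1. D1 0 a * e a)" using SI[OF ws] by blast
  define \<psi>' where "\<psi>' = (\<lambda>b. \<psi> b - vm n1 e T b)"
  have "\<forall>c<n3. (\<Sum>b<n2. \<psi>' b * D3 b c) = 0"
  proof (intro allI impI)
    fix l assume l: "l < n3"
    have "(\<Sum>b<n2. \<psi>' b * D3 b l) = vm n2 \<psi> D3 l - vm n2 (vm n1 e T) D3 l"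
      by (simp add: \<psi>'_def vm_def left_diff_distrib sum_subtractf)
    also have "vm n2 (vm n1 e T) D3 l = vm n1 e (mat_mul n2 T D3) l" by (rule vm_assoc)
    also have "\<dots> = (\<Sum>a<n1. e a * (D1 0 a * Eta l))" unfolding vm_def by (rule sum.cong) (use l TD3 in auto)
    also have "\<dots> = s * Eta l" by (simp add: e sum_distrib_left sum_distrib_right ac_simps)
    finally show "(\<Sum>b<n2. \<psi>' b * D3 b l) = 0" using ws l by simp
  qed
  then obtain w' where w': "\<forall>b<n2. \<psi>' b = (\<Sum>r<n1. w' r * D2 r b)" using R2[unfolded ROW_def, rule_format] by blast
  show "\<exists>x. \<forall>i<n2. \<psi> i = mv (n1 + n1) Q2 x i"
  proof (intro exI allI impI)
    fix b assume b: "b < n2"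
    define x where "x = (\<lambda>i. if i < n1 then w' i else e (i - n1))"
    have "mv (n1 + n1) Q2 x b = vm n1 x D2 b + vm n1 (\<lambda>a. x (n1 + a)) T b" by (rule Q2_split)
    also have "vm n1 x D2 b = \<psi>' b" using w' b unfolding vm_def x_def by simp
    also have "vm n1 (\<lambda>a. x (n1 + a)) T b = vm n1 e T b" by (simp add: x_def)
    finally show "\<psi> b = mv (n1 + n1) Q2 x b" by (simp add: \<psi>'_def)
  qed
qed

lemma minor_I:
  assumes Fit: "\<forall>u. \<exists>z. \<forall>j<nc. \<Delta> * u j = vm n2 z M j"
    and Sg: "\<forall>l<n3. s * Eta l = vm n2 \<psi> D3 l"
  shows "\<exists>e. \<Delta> * s = (\<Sum>a<n1. D1 0 a * e a)"
proof -
  obtain zf where zf: "\<And>u j. j < nc \<Longrightarrow> \<Delta> * u j = vm n2 (zf u) M j" using Fit by metis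
  define z where "z = (\<lambda>l0. zf (\<lambda>j. Iota l0 j))"
  define g where "g = (\<lambda>l0. vm n2 (z l0) D3)"
  define t where "t = (\<lambda>l0. \<Sum>l<n3. g l0 l * Lv l)"
  define H3 where "H3 = (\<lambda>l0 b. s * z l0 b - t l0 * \<psi> b + Lv l0 * \<Delta> * \<psi> b)"
  have "\<forall>i<n3. \<forall>c<n3. (\<Delta> * s) * id_mat i c = mat_mul n2 H3 D3 i c"
  proof (intro allI impI)
    fix l0 l assume l0: "l0 < n3" and l: "l < n3"
    have gI: "vm n3 (g l0) Iota j = \<Delta> * Iota l0 j" if "j < nc" for j
      using zf[OF that, of "\<lambda>j. Iota l0 j"] by (simp add: g_def vm_assoc M_def z_def)
    have "vm nc (vm n3 (g l0) Iota) Kap l = vm nc (\<lambda>j. \<Delta> * Iota l0 j) Kap l"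
      by (rule vm_cong) (use gI in auto)
    also have "\<dots> = \<Delta> * mat_mul nc Iota Kap l0 l" by (simp add: vm_def mat_mul_def sum_distrib_left mult.assoc)
    also have "mat_mul nc Iota Kap l0 l = id_mat l0 l - Lv l0 * Eta l" using ID[OF l0 l] by (simp add: eq_diff_eq)
    finally have gK: "vm nc (vm n3 (g l0) Iota) Kap l = \<Delta> * (id_mat l0 l - Lv l0 * Eta l)" .
    have gl: "g l0 l = \<Delta> * (id_mat l0 l - Lv l0 * Eta l) + t l0 * Eta l"
      using decomp_vec[OF l, of "g l0"] gK by (simp add: t_def)
    have "mat_mul n2 H3 D3 l0 l = (\<Sum>b<n2. s * (z l0 b * D3 b l) - t l0 * (\<psi> b * D3 b l) + (Lv l0 * \<Delta>) * (\<psi> b * D3 b l))"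
      unfolding mat_mul_def H3_def by (rule sum.cong) (simp_all add: algebra_simps)
    also have "\<dots> = s * g l0 l - t l0 * vm n2 \<psi> D3 l + Lv l0 * \<Delta> * vm n2 \<psi> D3 l"
      by (simp add: sum.distrib sum_subtractf sum_distrib_left g_def vm_def)
    also have "\<dots> = s * g l0 l - t l0 * (s * Eta l) + Lv l0 * \<Delta> * (s * Eta l)" using Sg l by simp
    also have "\<dots> = (\<Delta> * s) * id_mat l0 l" unfolding gl by (simp add: algebra_simps)
    finally show "(\<Delta> * s) * id_mat l0 l = mat_mul n2 H3 D3 l0 l" by simp
  qed
  then show ?thesis by (rule faithful)
qed

end


lemma ideal_gen_0: "0 \<in> ideal_gen S"
  unfolding ideal_gen_def by (rule CollectI, rule exI[of _ "{}"]) simp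

lemma ideal_gen_base: "s \<in> S \<Longrightarrow> s \<in> ideal_gen S"
  unfolding ideal_gen_def by (rule CollectI, rule exI[of _ "{s}"], rule exI[of _ "\<lambda>_. 1"]) simp

lemma ideal_gen_add:
  assumes x: "x \<in> ideal_gen S" and y: "y \<in> ideal_gen S"
  shows "x + y \<in> ideal_gen S"
proof -
  obtain T1 c1 where T1: "finite T1" "T1 \<subseteq> S" "x = (\<Sum>s\<in>T1. c1 s * s)" using x by (auto simp: ideal_gen_def)
  obtain T2 c2 where T2: "finite T2" "T2 \<subseteq> S" "y = (\<Sum>s\<in>T2. c2 s * s)" using y by (auto simp: ideal_gen_def)
  define c where "c = (\<lambda>s. (if s \<in> T1 then c1 s else 0) + (if s \<in> T2 then c2 s else 0))"
  have "(\<Sum>s\<in>T1 \<union> T2. c s * s) = (\<Sum>s\<in>T1 \<union> T2. (if s \<in> T1 then c1 s * s else 0)) + (\<Sum>s\<in>T1 \<union> T2. (if s \<in> T2 then c2 s * s else 0))"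
    unfolding c_def by (simp add: distrib_right sum.distrib if_distrib[of "\<lambda>x. x * _"] cong: if_cong)
  also have "(\<Sum>s\<in>T1 \<union> T2. (if s \<in> T1 then c1 s * s else 0)) = (\<Sum>s\<in>T1. c1 s * s)"
    using sum.inter_restrict[of "T1 \<union> T2" "\<lambda>s. c1 s * s" T1] T1(1) T2(1) by (simp add: Int_absorb1)
  also have "(\<Sum>s\<in>T1 \<union> T2. (if s \<in> T2 then c2 s * s else 0)) = (\<Sum>s\<in>T2. c2 s * s)"
    using sum.inter_restrict[of "T1 \<union> T2" "\<lambda>s. c2 s * s" T2] T1(1) T2(1) by (simp add: Int_absorb1)
  finally have "x + y = (\<Sum>s\<in>T1 \<union> T2. c s * s)" using T1(3) T2(3) by simp
  then show ?thesis unfolding ideal_gen_def using T1 T2 by blast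
qed

lemma ideal_gen_mult:
  assumes x: "x \<in> ideal_gen S"
  shows "a * x \<in> ideal_gen S"
proof -
  obtain T c where T: "finite T" "T \<subseteq> S" "x = (\<Sum>s\<in>T. c s * s)" using x by (auto simp: ideal_gen_def)
  have "a * x = (\<Sum>s\<in>T. (a * c s) * s)" using T(3) by (simp add: sum_distrib_left mult.assoc)
  then show ?thesis unfolding ideal_gen_def
    by (intro CollectI exI[of _ T] exI[of _ "\<lambda>s. a * c s"]) (use T in auto)
qed

lemma ideal_gen_sum:
  assumes "finite I" and "\<And>i. i \<in> I \<Longrightarrow> f i \<in> ideal_gen S"
  shows "sum f I \<in> ideal_gen S"
  using assms by (induction I rule: finite_induct) (auto intro: ideal_gen_0 ideal_gen_add)

lemma ideal_gen_UNIV: "1 \<in> ideal_gen S \<Longrightarrow> ideal_gen S = UNIV"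
  using ideal_gen_mult[of 1 S] by auto

lemma det_nat_cong:
  assumes "\<And>i j. i < k \<Longrightarrow> j < k \<Longrightarrow> N i j = N' i j"
  shows "det_nat k N = det_nat k N'"
  unfolding det_nat_def
proof (intro sum.cong refl arg_cong2[where f = "(*)"] prod.cong)
  fix \<sigma> i assume "\<sigma> \<in> {\<sigma>. \<sigma> permutes {..<k}}" "i \<in> {..<k}"
  then show "N i (\<sigma> i) = N' i (\<sigma> i)" using assms permutes_in_image by fastforce
qed

lemma det_nat_det: "det_nat k N = det (mat k k (\<lambda>(i,j). N i j))"
proof -
  have "det (mat k k (\<lambda>(i,j). N i j)) = (\<Sum>p\<in>{p. p permutes {..<k}}. of_int (sign p) * (\<Prod>i<k. mat k k (\<lambda>(i,j). N i j) $$ (i, p i)))"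
    unfolding det_def by (simp add: atLeast0LessThan)
  also have "\<dots> = det_nat k N"
    unfolding det_nat_def
  proof (intro sum.cong refl arg_cong2[where f = "(*)"] prod.cong)
    fix \<sigma> i assume "\<sigma> \<in> {\<sigma>. \<sigma> permutes {..<k}}" "i \<in> {..<k}"
    then show "mat k k (\<lambda>(i,j). N i j) $$ (i, \<sigma> i) = N i (\<sigma> i)" using permutes_in_image by fastforce
  qed
  finally show ?thesis by simp
qed

lemma det_expand:
  "det_nat k (mat_mul m A M) = (\<Sum>g\<in>PiE {..<k} (\<lambda>_. {..<m}). (\<Prod>i<k. A i (g i)) * det_nat k (\<lambda>i j. M (g i) j))"
proof -
  let ?P = "{\<sigma>. \<sigma> permutes {..<k}}" and ?G = "PiE {..<k} (\<lambda>_. {..<m})"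
  have "det_nat k (mat_mul m A M) = (\<Sum>\<sigma>\<in>?P. of_int (sign \<sigma>) * (\<Prod>i<k. \<Sum>l<m. A i l * M l (\<sigma> i)))"
    unfolding det_nat_def mat_mul_def ..
  also have "\<dots> = (\<Sum>\<sigma>\<in>?P. of_int (sign \<sigma>) * (\<Sum>g\<in>?G. \<Prod>i<k. A i (g i) * M (g i) (\<sigma> i)))"
    by (subst prod_sum_PiE) auto
  also have "\<dots> = (\<Sum>\<sigma>\<in>?P. \<Sum>g\<in>?G. (\<Prod>i<k. A i (g i)) * (of_int (sign \<sigma>) * (\<Prod>i<k. M (g i) (\<sigma> i))))"
    by (simp add: sum_distrib_left prod.distrib ac_simps)
  also have "\<dots> = (\<Sum>g\<in>?G. \<Sum>\<sigma>\<in>?P. (\<Prod>i<k. A i (g i)) * (of_int (sign \<sigma>) * (\<Prod>i<k. M (g i) (\<sigma> i))))"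
    by (rule sum.swap)
  also have "\<dots> = (\<Sum>g\<in>?G. (\<Prod>i<k. A i (g i)) * det_nat k (\<lambda>i j. M (g i) j))"
    by (simp add: det_nat_def sum_distrib_left)
  finally show ?thesis .
qed

lemma det_rows_in_ideal:
  assumes g: "g \<in> PiE {..<k} (\<lambda>_. {..<m})"
  shows "det_nat k (\<lambda>i j. M (g i) j) \<in> ideal_gen (max_minors m k M)"
proof (cases "inj_on g {..<k}")
  case False
  then obtain a b where ab: "a < k" "b < k" "a \<noteq> b" "g a = g b" unfolding inj_on_def by auto
  have "det (mat k k (\<lambda>(i,j). M (g i) j)) = 0"
    by (rule det_identical_rows[of _ k a b]) (use ab in auto)
  then show ?thesis by (simp add: det_nat_det ideal_gen_0)
next
  case True
  define S where "S = g ` {..<k}"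
  have finS: "finite S" by (simp add: S_def)
  have cardS: "card S = k" using True by (simp add: S_def card_image)
  have Sm: "S \<subseteq> {..<m}" using g by (auto simp: S_def PiE_def Pi_def)
  define xs where "xs = sorted_list_of_set S"
  have lxs: "length xs = k" using cardS finS by (simp add: xs_def)
  have sxs: "set xs = S" using finS by (simp add: xs_def)
  have strict: "sorted_wrt (<) xs" by (simp add: xs_def strict_sorted_list_of_set)
  define s where "s = (\<lambda>i. xs ! i)"
  have smono: "strict_mono_on {..<k} s"
    unfolding strict_mono_on_def s_def using strict lxs by (auto intro: sorted_wrt_nth_less)
  have simg: "s ` {..<k} = S"
    using lxs sxs by (auto simp: s_def set_conv_nth)
  have sinj: "inj_on s {..<k}" using smono by (rule strict_mono_on_imp_inj_on)
  have minor: "det_nat k (\<lambda>i j. M (s i) j) \<in> ideal_gen (max_minors m k M)"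
    by (rule ideal_gen_base) (use smono simg Sm in \<open>auto simp: max_minors_def\<close>)
  define \<pi> where "\<pi> = (\<lambda>i. if i < k then inv_into {..<k} s (g i) else i)"
  have gS: "g i \<in> S" if "i < k" for i using that by (simp add: S_def)
  have spi: "s (\<pi> i) = g i" if "i < k" for i
    using that gS[OF that] simg by (simp add: \<pi>_def f_inv_into_f)
  have pik: "\<pi> i < k" if "i < k" for i
    using that gS[OF that] simg inv_into_into[of "g i" s "{..<k}"] by (simp add: \<pi>_def)
  have bij: "bij_betw \<pi> {..<k} {..<k}"
  proof -
    have b1: "bij_betw g {..<k} S" using True by (simp add: S_def bij_betw_def)
    have b2: "bij_betw (inv_into {..<k} s) S {..<k}"
      using sinj simg by (metis bij_betw_imageI bij_betw_inv_into)
    have "bij_betw (inv_into {..<k} s \<circ> g) {..<k} {..<k}" by (rule bij_betw_trans[OF b1 b2])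
    then show ?thesis by (rule bij_betw_cong[THEN iffD1, rotated]) (simp add: \<pi>_def)
  qed
  have perm: "\<pi> permutes {..<k}" by (rule bij_imp_permutes[OF bij]) (simp add: \<pi>_def)
  define B where "B = mat k k (\<lambda>(i,j). M (s i) j)"
  have "det_nat k (\<lambda>i j. M (g i) j) = det (mat k k (\<lambda>(i,j). B $$ (\<pi> i, j)))"
    unfolding det_nat_det
    by (rule arg_cong[of _ _ det], rule eq_matI) (auto simp: B_def pik spi)
  also have "\<dots> = of_int (sign \<pi>) * det B"
    by (rule det_permute_rows) (use perm in \<open>auto simp: B_def atLeast0LessThan\<close>)
  also have "det B = det_nat k (\<lambda>i j. M (s i) j)" by (simp add: B_def det_nat_det)
  finally show ?thesis using ideal_gen_mult[OF minor] by simp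
qed

lemma det_nat_id: "det_nat k (\<lambda>i j. id_mat i j) = (1::'a::comm_ring_1)"
proof -
  have "mat k k (\<lambda>(i,j). id_mat i j) = (1\<^sub>m k :: 'a mat)"
    by (rule eq_matI) (auto simp: id_mat_def)
  then show ?thesis by (simp add: det_nat_det)
qed

lemma unit_minor:
  fixes A M :: "nat \<Rightarrow> nat \<Rightarrow> 'a::comm_ring_1"
  assumes AM: "\<And>i j. i < k \<Longrightarrow> j < k \<Longrightarrow> mat_mul m A M i j = id_mat i j"
  shows "1 \<in> ideal_gen (max_minors m k M)"
proof -
  have "(1::'a) = det_nat k (mat_mul m A M)"
    using det_nat_cong[of k "mat_mul m A M" "\<lambda>i j. id_mat i j"] AM det_nat_id by simp
  also have "\<dots> \<in> ideal_gen (max_minors m k M)"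
    unfolding det_expand
    by (rule ideal_gen_sum) (auto intro!: ideal_gen_mult det_rows_in_ideal simp: finite_PiE)
  finally show ?thesis .
qed

lemma fitting:
  fixes M :: "nat \<Rightarrow> nat \<Rightarrow> 'a::comm_ring_1"
  assumes sm: "\<sigma> ` {..<k} \<subseteq> {..<m}"
  shows "\<exists>z. \<forall>j<k. det_nat k (\<lambda>i j. M (\<sigma> i) j) * u j = vm m z M j"
proof -
  define A where "A = mat k k (\<lambda>(i,j). M (\<sigma> i) j)"
  have Ac: "A \<in> carrier_mat k k" by (simp add: A_def)
  define ad where "ad = adj_mat A"
  have adA: "ad * A = det A \<cdot>\<^sub>m 1\<^sub>m k" using adj_mat(3)[OF Ac] by (simp add: ad_def)
  have adc: "ad \<in> carrier_mat k k" using adj_mat(1)[OF Ac] by (simp add: ad_def)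
  have key: "(\<Sum>i<k. ad $$ (a,i) * M (\<sigma> i) j) = det A * id_mat a j" if "a < k" "j < k" for a j
  proof -
    have "(ad * A) $$ (a,j) = (\<Sum>i<k. ad $$ (a,i) * M (\<sigma> i) j)"
      using that adc by (simp add: scalar_prod_def A_def atLeast0LessThan)
    also have "(ad * A) $$ (a,j) = det A * id_mat a j" using that by (simp add: adA id_mat_def)
    finally show ?thesis by simp
  qed
  define z' where "z' = (\<lambda>i. \<Sum>a<k. u a * ad $$ (a,i))"
  define z where "z = (\<lambda>b. \<Sum>i<k. if \<sigma> i = b then z' i else 0)"
  show ?thesis
  proof (intro exI allI impI)
    fix j assume j: "j < k"
    have "vm m z M j = (\<Sum>b<m. \<Sum>i<k. if \<sigma> i = b then z' i * M b j else 0)"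
      unfolding vm_def z_def by (simp add: sum_distrib_right if_distrib[of "\<lambda>x. x * _"] cong: if_cong)
    also have "\<dots> = (\<Sum>i<k. \<Sum>b<m. if \<sigma> i = b then z' i * M b j else 0)" by (rule sum.swap)
    also have "\<dots> = (\<Sum>i<k. z' i * M (\<sigma> i) j)"
    proof (rule sum.cong[OF refl])
      fix i assume "i \<in> {..<k}"
      then have "\<sigma> i \<in> {..<m}" using sm by auto
      then show "(\<Sum>b<m. if \<sigma> i = b then z' i * M b j else 0) = z' i * M (\<sigma> i) j"
        by (simp add: sum.delta)
    qed
    also have "\<dots> = (\<Sum>i<k. \<Sum>a<k. u a * (ad $$ (a,i) * M (\<sigma> i) j))"
      unfolding z'_def by (simp add: sum_distrib_right mult.assoc)
    also have "\<dots> = (\<Sum>a<k. \<Sum>i<k. u a * (ad $$ (a,i) * M (\<sigma> i) j))" by (rule sum.swap)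
    also have "\<dots> = (\<Sum>a<k. u a * (\<Sum>i<k. ad $$ (a,i) * M (\<sigma> i) j))" by (simp add: sum_distrib_left)
    also have "\<dots> = (\<Sum>a<k. u a * (det A * id_mat a j))"
      by (rule sum.cong[OF refl]) (use j key in auto)
    also have "\<dots> = det A * u j" using j by (simp add: id_mat_def if_distrib[of "\<lambda>x. _ * x"] sum.delta cong: if_cong)
    finally show "det_nat k (\<lambda>i j. M (\<sigma> i) j) * u j = vm m z M j" by (simp add: det_nat_det A_def)
  qed
qed


definition submod :: "nat \<Rightarrow> (nat \<Rightarrow> 'a::comm_ring_1) set \<Rightarrow> bool" where
  "submod n N \<longleftrightarrow> N \<subseteq> vecs n \<and> (\<lambda>_. 0) \<in> N \<and> (\<forall>u\<in>N. \<forall>v\<in>N. (\<lambda>i. u i + v i) \<in> N) \<and> (\<forall>s. \<forall>u\<in>N. smul s u \<in> N)"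

lemma submod_lincomb:
  assumes N: "submod n N" and f: "\<And>i. i < (k::nat) \<Longrightarrow> f i \<in> N"
  shows "(\<lambda>r. \<Sum>i<k. c i * f i r) \<in> N"
  using f
proof (induction k)
  case 0 then show ?case using N by (simp add: submod_def)
next
  case (Suc k)
  have a: "(\<lambda>r. \<Sum>i<k. c i * f i r) \<in> N" using Suc by simp
  have b: "smul (c k) (f k) \<in> N" using N Suc.prems by (simp add: submod_def)
  have "(\<lambda>r. \<Sum>i<Suc k. c i * f i r) = (\<lambda>r. (\<Sum>i<k. c i * f i r) + smul (c k) (f k) r)"
    by (simp add: smul_def)
  then show ?case using a b N by (simp add: submod_def)
qed

lemma submod_diff:
  assumes N: "submod n N" and u: "u \<in> N" and v: "v \<in> N"
  shows "(\<lambda>i. u i - v i) \<in> N"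
proof -
  have "smul (-1) v \<in> N" using N v by (simp add: submod_def)
  then have "(\<lambda>i. u i + smul (-1) v i) \<in> N" using N u by (simp add: submod_def)
  then show ?thesis by (simp add: smul_def)
qed

lemma noeth_gen: "noetherian_ring TYPE('a::comm_ring_1) \<Longrightarrow> is_ideal (I::'a set) \<Longrightarrow> \<exists>S. finite S \<and> I = ideal_gen S"
  unfolding noetherian_ring_def by blast

lemma sum_set_nth: "distinct xs \<Longrightarrow> sum g (set xs) = (\<Sum>i<length xs. g (xs ! i))"
  using sum.reindex_bij_betw[OF bij_betw_nth[of xs "{..<length xs}" "set xs"], of g] by simp

lemma submod_fg:
  assumes noeth: "noetherian_ring TYPE('a::comm_ring_1)"
  shows "submod n (N::(nat \<Rightarrow> 'a) set) \<Longrightarrow> \<exists>m X. N = mimg n m X"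
proof (induction n arbitrary: N)
  case 0
  have "N = {\<lambda>_. 0}"
  proof
    show "N \<subseteq> {\<lambda>_. 0}" using 0 by (auto simp: submod_def vecs_def fun_eq_iff)
    show "{\<lambda>_. 0} \<subseteq> N" using 0 by (simp add: submod_def)
  qed
  moreover have "mimg 0 0 X = {\<lambda>_. 0}" for X :: "nat \<Rightarrow> nat \<Rightarrow> 'a"
    by (auto simp: mimg_def mat_app_def vecs_def)
  ultimately show ?case by blast
next
  case (Suc n)
  note N = Suc.prems
  define I where "I = {v n | v. v \<in> N}"
  have "is_ideal I"
    unfolding is_ideal_def
  proof (intro conjI ballI allI)
    show "0 \<in> I" using N by (force simp: I_def submod_def)
    fix x y assume "x \<in> I" "y \<in> I"
    then obtain u v where "u \<in> N" "v \<in> N" "x = u n" "y = v n" by (auto simp: I_def)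
    then show "x + y \<in> I" using N unfolding I_def submod_def by (intro CollectI exI[of _ "\<lambda>i. u i + v i"]) auto
  next
    fix a x assume "x \<in> I"
    then obtain u where "u \<in> N" "x = u n" by (auto simp: I_def)
    then show "a * x \<in> I" using N unfolding I_def submod_def by (intro CollectI exI[of _ "smul a u"]) (auto simp: smul_def)
  qed
  then obtain S where S: "finite S" "I = ideal_gen S" using noeth_gen[OF noeth] by blast
  obtain xs where xs: "set xs = S" "distinct xs" using finite_distinct_list[OF S(1)] by blast
  define k where "k = length xs"
  have "\<forall>i\<in>{..<k}. \<exists>w. w \<in> N \<and> w n = xs ! i"
  proof
    fix i assume "i \<in> {..<k}"
    then have "xs ! i \<in> S" using xs by (auto simp: k_def)
    then have "xs ! i \<in> I" using S by (simp add: ideal_gen_base)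
    then show "\<exists>w. w \<in> N \<and> w n = xs ! i" by (auto simp: I_def)
  qed
  then obtain wf where wf: "\<And>i. i < k \<Longrightarrow> wf i \<in> N \<and> wf i n = xs ! i" by (metis lessThan_iff)
  define N' where "N' = {v \<in> N. v n = 0}"
  have sub': "submod n N'"
    unfolding submod_def
  proof (intro conjI ballI allI)
    show "N' \<subseteq> vecs n"
    proof
      fix v assume "v \<in> N'"
      then have "v \<in> vecs (Suc n)" "v n = 0" using N by (auto simp: N'_def submod_def)
      then have h1: "\<forall>i\<ge>Suc n. v i = 0" "v n = 0" by (auto simp: vecs_def)
      have "\<forall>i\<ge>n. v i = 0"
      proof (intro allI impI)
        fix i assume "n \<le> i"
        then show "v i = 0" using h1 by (cases "i = n") auto
      qed
      then show "v \<in> vecs n" by (simp add: vecs_def)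
    qed
    show "(\<lambda>_. 0) \<in> N'" using N by (simp add: N'_def submod_def)
    fix u v assume "u \<in> N'" "v \<in> N'"
    then show "(\<lambda>i. u i + v i) \<in> N'" using N by (simp add: N'_def submod_def)
  next
    fix s u assume "u \<in> N'"
    then show "smul s u \<in> N'" using N by (simp add: N'_def submod_def smul_def)
  qed
  obtain m' X' where X': "N' = mimg n m' X'" using Suc.IH[OF sub'] by blast
  define X where "X = (\<lambda>r c. if c < m' then (if r < n then X' r c else 0) else wf (c - m') r)"
  have "N = mimg (Suc n) (m' + k) X"
  proof
    show "mimg (Suc n) (m' + k) X \<subseteq> N"
    proof
      fix y assume "y \<in> mimg (Suc n) (m' + k) X"
      then obtain z where z: "z \<in> vecs (m' + k)" "y = mat_app (Suc n) (m' + k) X z" by (auto simp: mimg_def)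
      have "mat_app n m' X' (trunc m' z) \<in> N'" using X' by (auto simp: mimg_def)
      moreover have "mat_app n m' X' (trunc m' z) = mat_app n m' X' z" by (simp only: mat_app_mv mv_trunc)
      ultimately have p1: "mat_app n m' X' z \<in> N" by (simp add: N'_def)
      have p2: "(\<lambda>r. \<Sum>i<k. z (m' + i) * wf i r) \<in> N" by (rule submod_lincomb[OF N]) (use wf in blast)
      have wv: "wf i \<in> vecs (Suc n)" if "i < k" for i using wf[OF that] N by (auto simp: submod_def)
      have "y = (\<lambda>r. mat_app n m' X' z r + (\<Sum>i<k. z (m' + i) * wf i r))"
      proof
        fix r
        show "y r = mat_app n m' X' z r + (\<Sum>i<k. z (m' + i) * wf i r)"
        proof (cases "r < Suc n")
          case True
          have "y r = (\<Sum>c<m'. X r c * z c) + (\<Sum>i<k. X r (m' + i) * z (m' + i))"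
            using True z(2) by (simp add: mat_app_def sum_split)
          also have "(\<Sum>c<m'. X r c * z c) = mat_app n m' X' z r"
            using True by (auto simp: X_def mat_app_def intro!: sum.neutral)
          also have "(\<Sum>i<k. X r (m' + i) * z (m' + i)) = (\<Sum>i<k. z (m' + i) * wf i r)"
            by (simp add: X_def mult.commute)
          finally show ?thesis .
        next
          case False
          then have "wf i r = 0" if "i < k" for i using wv[OF that] by (simp add: vecs_def)
          then show ?thesis using False z(2) by (simp add: mat_app_def)
        qed
      qed
      then show "y \<in> N" using p1 p2 N by (simp add: submod_def)
    qed
  next
    show "N \<subseteq> mimg (Suc n) (m' + k) X"
    proof
      fix v assume v: "v \<in> N"
      then have "v n \<in> ideal_gen S" using S by (auto simp: I_def)
      then obtain T c where T: "finite T" "T \<subseteq> S" "v n = (\<Sum>s\<in>T. c s * s)" by (auto simp: ideal_gen_def)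
      define d where "d = (\<lambda>i. if xs ! i \<in> T then c (xs ! i) else 0)"
      have vn: "v n = (\<Sum>i<k. d i * xs ! i)"
      proof -
        have "v n = (\<Sum>s\<in>S. if s \<in> T then c s * s else 0)"
          using T sum.inter_restrict[of S "\<lambda>s. c s * s" T] S(1) by (simp add: Int_absorb1 Int_commute)
        also have "\<dots> = (\<Sum>i<k. d i * xs ! i)"
          unfolding xs(1)[symmetric] sum_set_nth[OF xs(2)] k_def d_def by (simp add: if_distrib[of "\<lambda>x. x * _"] cong: if_cong)
        finally show ?thesis .
      qed
      define u where "u = (\<lambda>r. v r - (\<Sum>i<k. d i * wf i r))"
      have "u \<in> N" unfolding u_def by (rule submod_diff[OF N v submod_lincomb[OF N]]) (use wf in blast)
      moreover have "u n = 0" using vn wf by (simp add: u_def)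
      ultimately have "u \<in> N'" by (simp add: N'_def)
      then have "u \<in> mimg n m' X'" using X' by simp
      then obtain a where a: "a \<in> vecs m'" "u = mat_app n m' X' a" by (auto simp: mimg_def)
      define z where "z = (\<lambda>c. if c < m' then a c else if c < m' + k then d (c - m') else 0)"
      have zv: "z \<in> vecs (m' + k)" by (simp add: z_def vecs_def)
      have vv: "v \<in> vecs (Suc n)" using v N by (auto simp: submod_def)
      have "v = mat_app (Suc n) (m' + k) X z"
      proof
        fix r
        show "v r = mat_app (Suc n) (m' + k) X z r"
        proof (cases "r < Suc n")
          case True
          have "mat_app (Suc n) (m' + k) X z r = (\<Sum>c<m'. X r c * a c) + (\<Sum>i<k. wf i r * d i)"
            using True by (simp add: mat_app_def sum_split X_def z_def)
          also have "(\<Sum>c<m'. X r c * a c) = mat_app n m' X' a r"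
            using True by (auto simp: X_def mat_app_def intro!: sum.neutral)
          also have "\<dots> = u r" using a by simp
          finally show ?thesis by (simp add: u_def mult.commute)
        next
          case False
          then show ?thesis using vv by (simp add: mat_app_def vecs_def)
        qed
      qed
      then show "v \<in> mimg (Suc n) (m' + k) X" using zv by (auto simp: mimg_def)
    qed
  qed
  then show ?case by blast
qed

lemma submod_mker: "submod m (mker k m M)"
  unfolding submod_def mker_def
  by (auto simp: smul_def mat_app_def fun_eq_iff distrib_left sum.distrib mult.left_commute sum_distrib_left[symmetric] vecs_def)

lemma is_ideal_gen: "is_ideal (ideal_gen S)"
  unfolding is_ideal_def by (auto intro: ideal_gen_0 ideal_gen_add ideal_gen_mult)

lemma submod_J: "is_ideal J \<Longrightarrow> submod 1 {v \<in> vecs 1. v 0 \<in> J}"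
  unfolding submod_def is_ideal_def by (auto simp: smul_def vecs_def)

definition nxt :: "nat \<times> nat \<times> (nat \<Rightarrow> nat \<Rightarrow> 'a::comm_ring_1) \<Rightarrow> nat \<times> nat \<times> (nat \<Rightarrow> nat \<Rightarrow> 'a)" where
  "nxt st = (let (a, b, D) = st in (b, SOME mX. mker a b D = mimg b (fst mX) (snd mX)))"

primrec rseq :: "nat \<times> nat \<times> (nat \<Rightarrow> nat \<Rightarrow> 'a::comm_ring_1) \<Rightarrow> nat \<Rightarrow> nat \<times> nat \<times> (nat \<Rightarrow> nat \<Rightarrow> 'a)" where
  "rseq st0 0 = st0"
| "rseq st0 (Suc i) = nxt (rseq st0 i)"

lemma resolution_exists:
  assumes noeth: "noetherian_ring TYPE('a::comm_ring_1)" and J: "is_ideal (J::'a set)"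
  shows "\<exists>n D. free_resolution J n D"
proof -
  obtain m1 X1 where X1: "{v \<in> vecs 1. v 0 \<in> J} = mimg 1 m1 X1" using submod_fg[OF noeth submod_J[OF J]] by blast
  define st where "st = rseq (1, m1, X1)"
  define n where "n = (\<lambda>i. if i = 0 then 1 else fst (snd (st (i - 1))))"
  define D where "D = (\<lambda>i. if i = 0 then (\<lambda>_ _. 0) else snd (snd (st (i - 1))))"
  have ex: "\<exists>mX. mker a b Dm = mimg b (fst mX) (snd mX)" for a b and Dm :: "nat \<Rightarrow> nat \<Rightarrow> 'a"
    using submod_fg[OF noeth submod_mker[of b a Dm]] by auto
  have fst_st: "fst (st i) = n i" for i
  proof (induction i)
    case 0 then show ?case by (simp add: st_def n_def)
  next
    case (Suc i)
    have "fst (st (Suc i)) = fst (snd (st i))" by (simp add: st_def nxt_def split: prod.splits)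
    then show ?case by (simp add: n_def)
  qed
  have step: "mker (n i) (n (Suc i)) (D (Suc i)) = mimg (n (Suc i)) (n (Suc (Suc i))) (D (Suc (Suc i)))" for i
  proof -
    obtain a b Dm where sti: "st i = (a, b, Dm)" by (cases "st i") auto
    have a: "a = n i" using fst_st[of i] sti by simp
    have b: "b = n (Suc i)" "Dm = D (Suc i)" using sti by (simp_all add: n_def D_def)
    have "st (Suc i) = (b, SOME mX. mker a b Dm = mimg b (fst mX) (snd mX))"
      using sti by (simp add: st_def nxt_def)
    then have "n (Suc (Suc i)) = fst (SOME mX. mker a b Dm = mimg b (fst mX) (snd mX))"
      "D (Suc (Suc i)) = snd (SOME mX. mker a b Dm = mimg b (fst mX) (snd mX))"
      by (simp_all add: n_def D_def)
    moreover have "mker a b Dm = mimg b (fst (SOME mX. mker a b Dm = mimg b (fst mX) (snd mX))) (snd (SOME mX. mker a b Dm = mimg b (fst mX) (snd mX)))"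
      by (rule someI_ex[OF ex])
    ultimately show ?thesis using a b by simp
  qed
  have "free_resolution J n D"
    unfolding free_resolution_def
  proof (intro conjI allI impI)
    show "n 0 = 1" by (simp add: n_def)
    show "mimg 1 (n 1) (D 1) = {v \<in> vecs 1. v 0 \<in> J}" using X1 by (simp add: n_def D_def st_def)
    fix i :: nat assume "1 \<le> i"
    then obtain j where "i = Suc j" by (cases i) auto
    then show "mker (n (i - 1)) (n i) (D i) = mimg (n i) (n (i + 1)) (D (i + 1))" using step[of j] by simp
  qed
  then show ?thesis by blast
qed


lemma ideal_gen_induct:
  assumes x: "x \<in> ideal_gen S" and P0: "P 0"
    and Padd: "\<And>a b. P a \<Longrightarrow> P b \<Longrightarrow> P (a + b)"
    and Pbase: "\<And>c s. s \<in> S \<Longrightarrow> P (c * s)"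
  shows "P x"
proof -
  obtain T c where T: "finite T" "T \<subseteq> S" "x = (\<Sum>s\<in>T. c s * s)" using x by (auto simp: ideal_gen_def)
  have "P (\<Sum>s\<in>T. c s * s)" using T(1,2)
    by (induction T rule: finite_induct) (auto intro: P0 Padd Pbase)
  then show ?thesis using T(3) by simp
qed

lemma ext_ROW:
  assumes "ext_zero J i" "free_resolution J n D" "1 \<le> i"
  shows "ROW (n (Suc i)) (n i) (n (i - 1)) (D i) (D (Suc i))"
  by (rule ROW_from_sub) (use assms in \<open>auto simp: ext_zero_def\<close>)

lemma ext_ROW0:
  assumes "ext_zero J 0" "free_resolution J n D"
  shows "ROW (n 1) (n 0) 0 X (D 1)"
  by (rule ROW0_from_sub) (use assms in \<open>auto simp: ext_zero_def\<close>)

lemma res_GD: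
  assumes R: "free_resolution J n D" and i: "1 \<le> i" and r: "r < n (i - 1)" and c: "c < n (Suc i)"
  shows "mat_mul (n i) (D i) (D (Suc i)) r c = 0"
proof -
  have "mker (n (i - 1)) (n i) (D i) = mimg (n i) (n (i + 1)) (D (i + 1))" using R i by (simp add: free_resolution_def)
  then show ?thesis by (intro complex_from_eq[OF _ r]) (use c in auto)
qed

lemma res_D1:
  assumes R: "free_resolution J n D" and c: "c < n 1"
  shows "D 1 0 c \<in> J"
proof -
  have "mat_app 1 (n 1) (D 1) (uv c) \<in> mimg 1 (n 1) (D 1)" using c by (auto simp: mimg_def)
  then have "mat_app 1 (n 1) (D 1) (uv c) 0 \<in> J" using R by (simp add: free_resolution_def)
  then show ?thesis using c by (simp add: mat_app_uv)
qed

lemma grade_ge4: "grade J \<ge> 4 \<Longrightarrow> i < 4 \<Longrightarrow> ext_zero J i"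
proof -
  assume g: "grade J \<ge> 4" and i: "i < 4"
  show "ext_zero J i"
  proof (cases "\<forall>i. ext_zero J i")
    case True then show ?thesis by simp
  next
    case False
    then have "grade J = enat (LEAST i. \<not> ext_zero J i)" by (simp add: grade_def)
    then have "4 \<le> (LEAST i. \<not> ext_zero J i)" using g by (simp add: numeral_eq_enat)
    then have "i < (LEAST i. \<not> ext_zero J i)" using i by simp
    then show ?thesis using not_less_Least by blast
  qed
qed

lemma grade_eq4: "grade J \<ge> 4 \<Longrightarrow> \<not> ext_zero J 4 \<Longrightarrow> grade J = 4"
proof -
  assume g: "grade J \<ge> 4" and n4: "\<not> ext_zero J 4"
  then have F: "\<not> (\<forall>i. ext_zero J i)" by blast
  then have gd: "grade J = enat (LEAST i. \<not> ext_zero J i)" by (simp add: grade_def)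
  have "(LEAST i. \<not> ext_zero J i) \<le> 4" using n4 by (rule Least_le)
  moreover have "4 \<le> (LEAST i. \<not> ext_zero J i)" using g gd by (simp add: numeral_eq_enat)
  ultimately show ?thesis using gd by (simp add: numeral_eq_enat)
qed

context Bmat
begin

lemma J_y:
  assumes j: "j \<in> ideal_gen (max_minors n2 nc M)"
  shows "\<exists>x. \<forall>i<nc. j * y i = vm n2 x M i"
  using j
proof (rule ideal_gen_induct)
  show "\<exists>x. \<forall>i<nc. 0 * y i = vm n2 x M i" by (rule exI[of _ "\<lambda>_. 0"]) (simp add: vm_def)
next
  fix a b assume "\<exists>x. \<forall>i<nc. a * y i = vm n2 x M i" "\<exists>x. \<forall>i<nc. b * y i = vm n2 x M i"
  then obtain x x' where "\<forall>i<nc. a * y i = vm n2 x M i" "\<forall>i<nc. b * y i = vm n2 x' M i" by blast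
  then show "\<exists>x. \<forall>i<nc. (a + b) * y i = vm n2 x M i"
    by (intro exI[of _ "\<lambda>b. x b + x' b"]) (simp add: vm_add distrib_right)
next
  fix c \<Delta> assume "\<Delta> \<in> max_minors n2 nc M"
  then obtain \<sigma> where \<sigma>: "\<Delta> = det_nat nc (\<lambda>i j. M (\<sigma> i) j)" "\<sigma> ` {..<nc} \<subseteq> {..<n2}"
    by (auto simp: max_minors_def)
  obtain z where z: "\<forall>j<nc. \<Delta> * y j = vm n2 z M j" using fitting[OF \<sigma>(2), of M y] \<sigma>(1) by blast
  show "\<exists>x. \<forall>i<nc. (c * \<Delta>) * y i = vm n2 x M i"
    by (rule exI[of _ "\<lambda>b. c * z b"]) (use z in \<open>simp add: vm_def sum_distrib_left mult.assoc\<close>)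
qed

lemma J_s:
  assumes j: "j \<in> ideal_gen (max_minors n2 nc M)"
    and Sg: "\<forall>l<n3. s * Eta l = vm n2 \<psi> D3 l"
  shows "\<exists>e. j * s = (\<Sum>a<n1. D1 0 a * e a)"
  using j
proof (rule ideal_gen_induct)
  show "\<exists>e. 0 * s = (\<Sum>a<n1. D1 0 a * e a)" by (rule exI[of _ "\<lambda>_. 0"]) simp
next
  fix a b assume "\<exists>e. a * s = (\<Sum>a<n1. D1 0 a * e a)" "\<exists>e. b * s = (\<Sum>a<n1. D1 0 a * e a)"
  then obtain e e' where "a * s = (\<Sum>a<n1. D1 0 a * e a)" "b * s = (\<Sum>a<n1. D1 0 a * e' a)" by blast
  then show "\<exists>e. (a + b) * s = (\<Sum>a<n1. D1 0 a * e a)"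
    by (intro exI[of _ "\<lambda>x. e x + e' x"]) (simp add: distrib_right distrib_left sum.distrib)
next
  fix c \<Delta> assume "\<Delta> \<in> max_minors n2 nc M"
  then obtain \<sigma> where \<sigma>: "\<Delta> = det_nat nc (\<lambda>i j. M (\<sigma> i) j)" "\<sigma> ` {..<nc} \<subseteq> {..<n2}"
    by (auto simp: max_minors_def)
  have Fit: "\<forall>u. \<exists>z. \<forall>j<nc. \<Delta> * u j = vm n2 z M j" using fitting[OF \<sigma>(2), of M] \<sigma>(1) by blast
  obtain e where e: "\<Delta> * s = (\<Sum>a<n1. D1 0 a * e a)" using minor_I[OF Fit Sg] by blast
  show "\<exists>e. (c * \<Delta>) * s = (\<Sum>a<n1. D1 0 a * e a)"
    by (rule exI[of _ "\<lambda>a. c * e a"]) (simp add: mult.assoc e sum_distrib_left mult.left_commute)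
qed

lemma SI:
  assumes noeth: "noetherian_ring TYPE('a)"
    and ext: "\<And>i. i < 4 \<Longrightarrow> ext_zero (ideal_gen (max_minors n2 nc M)) i"
    and Sg: "\<forall>l<n3. s * Eta l = vm n2 \<psi> D3 l"
  shows "\<exists>e. s = (\<Sum>a<n1. D1 0 a * e a)"
proof -
  let ?J = "ideal_gen (max_minors n2 nc M)"
  obtain n D where R: "free_resolution ?J n D" using resolution_exists[OF noeth is_ideal_gen] by blast
  define m where "m = (\<lambda>j::nat. if j = 0 then 1 else if j = 1 then n1 else if j = 2 then n2 else if j = 3 then n3 else 0)"
  define P where "P = (\<lambda>j::nat. if j = 1 then D1 else if j = 2 then D2 else if j = 3 then D3 else (\<lambda>_ _. 0))"
  have n0: "n 0 = 1" using R by (simp add: free_resolution_def)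
  have "\<exists>x. \<forall>i<m 0. (\<lambda>_. s) i = mv (m 1) (P 1) x i"
  proof (rule chase[where n = n and D = D])
    show "n 0 = 1" by (rule n0)
    show "\<And>i r c. 1 \<le> i \<Longrightarrow> i \<le> 4 \<Longrightarrow> r < n (i - 1) \<Longrightarrow> c < n (Suc i) \<Longrightarrow> mat_mul (n i) (D i) (D (Suc i)) r c = 0"
      using res_GD[OF R] by blast
    show "0 < m 4 \<Longrightarrow> ROW (n 5) (n 4) (n 3) (D 4) (D 5)" by (simp add: m_def)
    show "ROW (n 4) (n 3) (n 2) (D 3) (D 4)" using ext_ROW[OF ext[of 3] R] by (simp add: numeral_eq_Suc)
    show "ROW (n 3) (n 2) (n 1) (D 2) (D 3)" using ext_ROW[OF ext[of 2] R] by (simp add: numeral_eq_Suc)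
    show "ROW (n 2) (n 1) (n 0) (D 1) (D 2)" using ext_ROW[OF ext[of 1] R] by (simp add: numeral_eq_Suc)
    show "ROW (n 1) (n 0) 0 (D 0) (D 1)" using ext_ROW0[OF ext[of 0] R] by simp
    show "\<And>j r c. 1 \<le> j \<Longrightarrow> j \<le> 3 \<Longrightarrow> r < m (j - 1) \<Longrightarrow> c < m (Suc j) \<Longrightarrow> mat_mul (m j) (P j) (P (Suc j)) r c = 0"
    proof -
      fix j r c assume j: "1 \<le> j" "j \<le> 3" and r: "r < m (j - 1)" and c: "c < m (Suc j)"
      then consider "j = 1" | "j = 2" | "j = 3" by linarith
      then show "mat_mul (m j) (P j) (P (Suc j)) r c = 0"
        by cases (use r c C12 C23 in \<open>auto simp: m_def P_def\<close>)
    qed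
    show "EXA (m 0) (m 1) (m 2) (P 1) (P 2)" using A1 by (simp add: m_def P_def)
    show "EXA (m 1) (m 2) (m 3) (P 2) (P 3)" using A2 by (simp add: m_def P_def numeral_eq_Suc)
    show "EXA (m 2) (m 3) (m 4) (P 3) (P 4)"
      using A3inj by (simp add: m_def P_def numeral_eq_Suc EXA_def mv_def)
    show "\<And>v. \<forall>i<m 3. mv (m 4) (P 4) v i = 0 \<Longrightarrow> \<forall>i<m 4. v i = 0" by (simp add: m_def)
    show "\<forall>c<n 1. \<exists>x. \<forall>i<m 0. D 1 0 c * (\<lambda>_. s) i = mv (m 1) (P 1) x i"
    proof (intro allI impI)
      fix c assume "c < n 1"
      then have "D 1 0 c \<in> ?J" by (rule res_D1[OF R])
      from J_s[OF this Sg] obtain e where "D 1 0 c * s = (\<Sum>a<n1. D1 0 a * e a)" by blast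
      then show "\<exists>x. \<forall>i<m 0. D 1 0 c * (\<lambda>_. s) i = mv (m 1) (P 1) x i"
        by (intro exI[of _ e]) (simp add: m_def P_def mv_def)
    qed
  qed
  then obtain x where "s = mv n1 D1 x 0" by (auto simp: m_def P_def)
  then show ?thesis by (auto simp: mv_def)
qed

lemma not_ext4:
  assumes noeth: "noetherian_ring TYPE('a)"
    and ext: "\<And>i. i < 4 \<Longrightarrow> ext_zero (ideal_gen (max_minors n2 nc M)) i"
    and nU: "ideal_gen (max_minors n2 nc M) \<noteq> UNIV"
  shows "\<not> ext_zero (ideal_gen (max_minors n2 nc M)) 4"
proof
  assume e4: "ext_zero (ideal_gen (max_minors n2 nc M)) 4"
  let ?J = "ideal_gen (max_minors n2 nc M)"
  obtain n D where R: "free_resolution ?J n D" using resolution_exists[OF noeth is_ideal_gen] by blast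
  have B1': "EXA nc n2 (n1 + n1) (tr M) Q2"
    by (rule B1) (use SI[OF noeth ext] in blast)
  define m where "m = (\<lambda>j::nat. if j = 0 then nc else if j = 1 then n2 else if j = 2 then n1 + n1 else if j = 3 then n2 else nc)"
  define P where "P = (\<lambda>j::nat. if j = 1 then tr M else if j = 2 then Q2 else if j = 3 then Q3 else M)"
  have n0: "n 0 = 1" using R by (simp add: free_resolution_def)
  have surj: "\<exists>x. \<forall>i<nc. y i = mv n2 (tr M) x i" for y
  proof -
    have "\<exists>x. \<forall>i<m 0. y i = mv (m 1) (P 1) x i"
    proof (rule chase[where n = n and D = D])
      show "n 0 = 1" by (rule n0)
      show "\<And>i r c. 1 \<le> i \<Longrightarrow> i \<le> 4 \<Longrightarrow> r < n (i - 1) \<Longrightarrow> c < n (Suc i) \<Longrightarrow> mat_mul (n i) (D i) (D (Suc i)) r c = 0"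
        using res_GD[OF R] by blast
      show "0 < m 4 \<Longrightarrow> ROW (n 5) (n 4) (n 3) (D 4) (D 5)" using ext_ROW[OF e4 R] by (simp add: numeral_eq_Suc)
      show "ROW (n 4) (n 3) (n 2) (D 3) (D 4)" using ext_ROW[OF ext[of 3] R] by (simp add: numeral_eq_Suc)
      show "ROW (n 3) (n 2) (n 1) (D 2) (D 3)" using ext_ROW[OF ext[of 2] R] by (simp add: numeral_eq_Suc)
      show "ROW (n 2) (n 1) (n 0) (D 1) (D 2)" using ext_ROW[OF ext[of 1] R] by (simp add: numeral_eq_Suc)
      show "ROW (n 1) (n 0) 0 (D 0) (D 1)" using ext_ROW0[OF ext[of 0] R] by simp
      show "\<And>j r c. 1 \<le> j \<Longrightarrow> j \<le> 3 \<Longrightarrow> r < m (j - 1) \<Longrightarrow> c < m (Suc j) \<Longrightarrow> mat_mul (m j) (P j) (P (Suc j)) r c = 0"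
      proof -
        fix j r c assume j: "1 \<le> j" "j \<le> 3" and r: "r < m (j - 1)" and c: "c < m (Suc j)"
        then consider "j = 1" | "j = 2" | "j = 3" by linarith
        then show "mat_mul (m j) (P j) (P (Suc j)) r c = 0"
          by cases (use r c BC21 BC32 BC43 in \<open>auto simp: m_def P_def\<close>)
      qed
      show "EXA (m 0) (m 1) (m 2) (P 1) (P 2)" using B1' by (simp add: m_def P_def)
      show "EXA (m 1) (m 2) (m 3) (P 2) (P 3)" using B2 by (simp add: m_def P_def numeral_eq_Suc)
      show "EXA (m 2) (m 3) (m 4) (P 3) (P 4)" using B3 by (simp add: m_def P_def numeral_eq_Suc)
      show "\<And>v. \<forall>i<m 3. mv (m 4) (P 4) v i = 0 \<Longrightarrow> \<forall>i<m 4. v i = 0"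
        using B4inj by (simp add: m_def P_def numeral_eq_Suc)
      show "\<forall>c<n 1. \<exists>x. \<forall>i<m 0. D 1 0 c * y i = mv (m 1) (P 1) x i"
      proof (intro allI impI)
        fix c assume "c < n 1"
        then have "D 1 0 c \<in> ?J" by (rule res_D1[OF R])
        from J_y[OF this] obtain x where "\<forall>i<nc. D 1 0 c * y i = vm n2 x M i" by blast
        then show "\<exists>x. \<forall>i<m 0. D 1 0 c * y i = mv (m 1) (P 1) x i"
          by (intro exI[of _ x]) (simp add: m_def P_def mv_def vm_def tr_def mult.commute)
      qed
    qed
    then show ?thesis by (simp add: m_def P_def)
  qed
  have "\<forall>j\<in>{..<nc}. \<exists>x. \<forall>i<nc. uv j i = mv n2 (tr M) x i" using surj by blast
  then obtain xf where xf: "\<And>j i. j < nc \<Longrightarrow> i < nc \<Longrightarrow> uv j i = mv n2 (tr M) (xf j) i" by (metis lessThan_iff)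
  have "1 \<in> ?J"
  proof (rule unit_minor[of nc n2 "\<lambda>j b. xf j b" M])
    fix i j assume "i < nc" "j < nc"
    then show "mat_mul n2 (\<lambda>j b. xf j b) M i j = id_mat i j"
      using xf[of i j] by (cases "i = j") (simp_all add: mat_mul_def mv_def tr_def uv_def id_mat_def mult.commute)
  qed
  then show False using nU ideal_gen_UNIV by blast
qed

end


lemma lin_fun_expand: "\<phi> \<in> lin_fun n \<Longrightarrow> u \<in> vecs n \<Longrightarrow> \<phi> u = (\<Sum>b<n. u b * \<phi> (uv b))"
  by (rule lin_expand) (auto simp: lin_fun_def)

lemma lin_fun_out: "\<phi> \<in> lin_fun n \<Longrightarrow> u \<notin> vecs n \<Longrightarrow> \<phi> u = 0"
  by (auto simp: lin_fun_def)

lemma sum_uv_left: "(\<Sum>x<(n::nat). uv a x * g x) = (if a < n then g a else (0::'a::comm_ring_1))"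
  by (rule sum_uv)

lemma lin_fun_of_coeffs:
  "(\<lambda>u. if u \<in> vecs n then (\<Sum>a<n. u a * w a) else (0::'a::comm_ring_1)) \<in> lin_fun n"
  unfolding lin_fun_def
  by (auto simp: distrib_right sum.distrib smul_def sum_distrib_left mult.assoc smul_vecs[unfolded smul_def])

locale Tsetup = Bmat +
  fixes p q :: nat and m12 :: "(nat \<Rightarrow> 'a) \<Rightarrow> (nat \<Rightarrow> 'a) \<Rightarrow> (nat \<Rightarrow> 'a)"
  assumes e1: "p + 2 = n1" and e2: "p + q = n2" and e3: "q - 1 = n3" and e4: "q - 2 = nc"
    and eta: "\<And>e f. e \<in> vecs n1 \<Longrightarrow> f \<in> vecs n2 \<Longrightarrow> lin_form n3 Eta (m12 e f) = (\<Sum>x<n1. \<Sum>y<n2. e x * f y * T x y)"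
begin

lemma eta_T: "e \<in> vecs n1 \<Longrightarrow> f \<in> vecs n2 \<Longrightarrow> lin_form n3 Eta (m12 e f) = (\<Sum>x<n1. e x * mv n2 T f x)"
  by (simp add: eta mv_def sum_distrib_left ac_simps)

lemma delta4_eq: "delta4 p q D3 Iota c = mat_app n2 nc M c"
proof -
  have "delta4 p q D3 Iota c = mat_app n2 n3 D3 (mat_app n3 nc Iota c)"
    unfolding delta4_def e2 e3 e4 ..
  also have "\<dots> = mat_app n2 nc M c"
  proof
    fix r
    have "mv n3 D3 (mat_app n3 nc Iota c) r = mv n3 D3 (mv nc Iota c) r"
      by (rule arg_cong[of _ _ "\<lambda>x. x r"], rule mv_cong) (simp add: mat_app_mv)
    then show "mat_app n2 n3 D3 (mat_app n3 nc Iota c) r = mat_app n2 nc M c r"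
      by (simp add: mat_app_mv mv_assoc M_def)
  qed
  finally show ?thesis .
qed

lemma delta3_alt: "delta3 p q D2 m12 Eta f = ((\<lambda>e. if e \<in> vecs n1 then lin_form n3 Eta (m12 e f) else 0), mat_app n1 n2 D2 f)"
  unfolding delta3_def e1 e2 e3 ..

lemma delta2_alt: "delta2 p q D2 m12 Eta x = (\<lambda>f. if f \<in> vecs n2 then fst x (mat_app n1 n2 D2 f) + lin_form n3 Eta (m12 (snd x) f) else 0)"
  unfolding delta2_def e1 e2 e3 ..

lemma delta1_alt: "delta1 p q D3 Iota \<psi> = (\<lambda>c. if c \<in> vecs nc then \<psi> (mat_app n2 nc M c) else 0)"
  unfolding delta1_def e4 delta4_eq ..

lemma Q3_mv: "mv n2 Q3 f i = (if i < n1 then mv n2 T f i else mv n2 D2 f (i - n1))"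
  by (cases "i < n1") (simp_all add: mv_def Q3_def)

definition coord :: "((nat \<Rightarrow> 'a) \<Rightarrow> 'a) \<Rightarrow> (nat \<Rightarrow> 'a) \<Rightarrow> nat \<Rightarrow> 'a" where
  "coord \<phi> e = (\<lambda>i. if i < n1 then \<phi> (uv i) else e (i - n1))"

lemma delta2_coord:
  assumes \<phi>: "\<phi> \<in> lin_fun n1" and e: "e \<in> vecs n1" and f: "f \<in> vecs n2"
  shows "delta2 p q D2 m12 Eta (\<phi>, e) f = (\<Sum>b<n2. f b * mv (n1 + n1) Q2 (coord \<phi> e) b)"
proof -
  have 1: "\<phi> (mat_app n1 n2 D2 f) = (\<Sum>b<n2. f b * vm n1 (coord \<phi> e) D2 b)"
  proof -
    have "\<phi> (mat_app n1 n2 D2 f) = (\<Sum>a<n1. mat_app n1 n2 D2 f a * \<phi> (uv a))"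
      by (rule lin_fun_expand[OF \<phi> mat_app_vecs])
    also have "\<dots> = (\<Sum>a<n1. (\<Sum>b<n2. D2 a b * f b) * \<phi> (uv a))"
      by (rule sum.cong) (auto simp: mat_app_def)
    also have "\<dots> = (\<Sum>b<n2. f b * (\<Sum>a<n1. D2 a b * \<phi> (uv a)))" by (rule swap2)
    also have "\<dots> = (\<Sum>b<n2. f b * vm n1 (coord \<phi> e) D2 b)"
      by (intro sum.cong refl arg_cong2[where f = "(*)"]) (auto simp: vm_def coord_def mult.commute intro!: sum.cong)
    finally show ?thesis .
  qed
  have 2: "lin_form n3 Eta (m12 e f) = (\<Sum>b<n2. f b * vm n1 (\<lambda>a. coord \<phi> e (n1 + a)) T b)"
  proof -
    have "lin_form n3 Eta (m12 e f) = (\<Sum>x<n1. (\<Sum>b<n2. T x b * f b) * e x)"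
      using eta_T[OF e f] by (simp add: mv_def mult.commute)
    also have "\<dots> = (\<Sum>b<n2. f b * (\<Sum>x<n1. T x b * e x))" by (rule swap2)
    also have "\<dots> = (\<Sum>b<n2. f b * vm n1 (\<lambda>a. coord \<phi> e (n1 + a)) T b)"
      by (simp add: vm_def coord_def mult.commute)
    finally show ?thesis .
  qed
  show ?thesis
    using f 1 2 by (simp add: delta2_alt Q2_split distrib_left sum.distrib)
qed

lemma Q3iff:
  assumes f: "f \<in> vecs n2"
  shows "delta3 p q D2 m12 Eta f = (\<lambda>_. 0, \<lambda>_. 0) \<longleftrightarrow> (\<forall>i<n1 + n1. mv n2 Q3 f i = 0)"
proof
  assume h: "delta3 p q D2 m12 Eta f = (\<lambda>_. 0, \<lambda>_. 0)"
  then have hA: "\<And>e. e \<in> vecs n1 \<Longrightarrow> lin_form n3 Eta (m12 e f) = 0"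
    and hB: "mat_app n1 n2 D2 f = (\<lambda>_. 0)"
    unfolding delta3_alt by (auto simp: fun_eq_iff split: if_splits)
  show "\<forall>i<n1 + n1. mv n2 Q3 f i = 0"
  proof (intro allI impI)
    fix i assume i: "i < n1 + n1"
    show "mv n2 Q3 f i = 0"
    proof (cases "i < n1")
      case True
      have "lin_form n3 Eta (m12 (uv i) f) = mv n2 T f i"
        using eta_T[of "uv i" f] f True by (simp add: sum_uv)
      then show ?thesis using hA[of "uv i"] True by (simp add: Q3_mv)
    next
      case False
      have "i - n1 < n1" using False i by linarith
      then show ?thesis using fun_cong[OF hB, of "i - n1"] False by (simp add: Q3_mv mat_app_mv)
    qed
  qed
next
  assume h: "\<forall>i<n1 + n1. mv n2 Q3 f i = 0"
  have T0: "mv n2 T f x = 0" if "x < n1" for x using h[rule_format, of x] that by (simp add: Q3_mv)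
  have D0: "mv n2 D2 f r = 0" if "r < n1" for r using h[rule_format, of "n1 + r"] that by (simp add: Q3_mv)
  have "(\<lambda>e. if e \<in> vecs n1 then lin_form n3 Eta (m12 e f) else 0) = (\<lambda>_. 0)"
  proof
    fix e show "(if e \<in> vecs n1 then lin_form n3 Eta (m12 e f) else 0) = 0"
      using eta_T[of e f] f T0 by simp
  qed
  moreover have "mat_app n1 n2 D2 f = (\<lambda>_. 0)" using D0 by (simp add: mat_app_mv fun_eq_iff)
  ultimately show "delta3 p q D2 m12 Eta f = (\<lambda>_. 0, \<lambda>_. 0)" by (simp add: delta3_alt)
qed

lemma E4: "{c \<in> vecs nc. delta4 p q D3 Iota c = (\<lambda>_. 0)} = {\<lambda>_. 0}"
proof
  show "{c \<in> vecs nc. delta4 p q D3 Iota c = (\<lambda>_. 0)} \<subseteq> {\<lambda>_. 0}"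
  proof
    fix c assume "c \<in> {c \<in> vecs nc. delta4 p q D3 Iota c = (\<lambda>_. 0)}"
    then have c: "c \<in> vecs nc" and z: "mat_app n2 nc M c = (\<lambda>_. 0)" by (auto simp: delta4_eq)
    have "\<forall>i<n2. mv nc M c i = 0" using z by (simp add: mat_app_mv fun_eq_iff) (metis)
    then have "\<forall>i<nc. c i = 0" by (rule B4inj)
    then have "c = (\<lambda>_. 0)" using c by (intro vecs_eqI) auto
    then show "c \<in> {\<lambda>_. 0}" by simp
  qed
  show "{\<lambda>_. 0} \<subseteq> {c \<in> vecs nc. delta4 p q D3 Iota c = (\<lambda>_. 0)}"
    by (auto simp: delta4_eq mat_app_def)
qed

lemma E3: "{f \<in> vecs n2. delta3 p q D2 m12 Eta f = (\<lambda>_. 0, \<lambda>_. 0)} = delta4 p q D3 Iota ` vecs nc"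
proof
  show "{f \<in> vecs n2. delta3 p q D2 m12 Eta f = (\<lambda>_. 0, \<lambda>_. 0)} \<subseteq> delta4 p q D3 Iota ` vecs nc"
  proof
    fix f assume "f \<in> {f \<in> vecs n2. delta3 p q D2 m12 Eta f = (\<lambda>_. 0, \<lambda>_. 0)}"
    then have f: "f \<in> vecs n2" and z: "\<forall>i<n1 + n1. mv n2 Q3 f i = 0" using Q3iff by auto
    obtain u where u: "\<forall>i<n2. f i = mv nc M u i" using B3 z unfolding EXA_def by blast
    have "f = delta4 p q D3 Iota (trunc nc u)"
      unfolding delta4_eq by (rule vecs_eqI[OF f mat_app_vecs]) (simp add: u mat_app_mv)
    then show "f \<in> delta4 p q D3 Iota ` vecs nc" by auto
  qed
  show "delta4 p q D3 Iota ` vecs nc \<subseteq> {f \<in> vecs n2. delta3 p q D2 m12 Eta f = (\<lambda>_. 0, \<lambda>_. 0)}"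
  proof
    fix f assume "f \<in> delta4 p q D3 Iota ` vecs nc"
    then obtain c where c: "c \<in> vecs nc" "f = mat_app n2 nc M c" by (auto simp: delta4_eq)
    have fv: "f \<in> vecs n2" using c by simp
    have "\<forall>i<n1 + n1. mv n2 Q3 f i = 0"
    proof (intro allI impI)
      fix i assume i: "i < n1 + n1"
      have "mv n2 Q3 f i = mv n2 Q3 (mv nc M c) i"
        by (rule arg_cong[of _ _ "\<lambda>x. x i"], rule mv_cong) (simp add: c mat_app_mv)
      also have "\<dots> = mv nc (mat_mul n2 Q3 M) c i" by (rule mv_assoc)
      also have "\<dots> = 0" by (rule mv_zero_mat) (use BC43 i in auto)
      finally show "mv n2 Q3 f i = 0" .
    qed
    then show "f \<in> {f \<in> vecs n2. delta3 p q D2 m12 Eta f = (\<lambda>_. 0, \<lambda>_. 0)}" using Q3iff[OF fv] fv by simp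
  qed
qed

lemma delta2_zero_iff:
  assumes \<phi>: "\<phi> \<in> lin_fun n1" and e: "e \<in> vecs n1"
  shows "delta2 p q D2 m12 Eta (\<phi>, e) = (\<lambda>_. 0) \<longleftrightarrow> (\<forall>b<n2. mv (n1 + n1) Q2 (coord \<phi> e) b = 0)"
proof
  assume h: "delta2 p q D2 m12 Eta (\<phi>, e) = (\<lambda>_. 0)"
  show "\<forall>b<n2. mv (n1 + n1) Q2 (coord \<phi> e) b = 0"
  proof (intro allI impI)
    fix b assume b: "b < n2"
    have "0 = delta2 p q D2 m12 Eta (\<phi>, e) (uv b)" using h by simp
    also have "\<dots> = mv (n1 + n1) Q2 (coord \<phi> e) b" using delta2_coord[OF \<phi> e, of "uv b"] b by (simp add: sum_uv)
    finally show "mv (n1 + n1) Q2 (coord \<phi> e) b = 0" by simp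
  qed
next
  assume h: "\<forall>b<n2. mv (n1 + n1) Q2 (coord \<phi> e) b = 0"
  show "delta2 p q D2 m12 Eta (\<phi>, e) = (\<lambda>_. 0)"
  proof
    fix f show "delta2 p q D2 m12 Eta (\<phi>, e) f = 0"
    proof (cases "f \<in> vecs n2")
      case True then show ?thesis using delta2_coord[OF \<phi> e True] h by simp
    next
      case False then show ?thesis by (simp add: delta2_alt)
    qed
  qed
qed

lemma delta3_lin: "f \<in> vecs n2 \<Longrightarrow> fst (delta3 p q D2 m12 Eta f) \<in> lin_fun n1"
proof -
  assume f: "f \<in> vecs n2"
  have "fst (delta3 p q D2 m12 Eta f) = (\<lambda>u. if u \<in> vecs n1 then (\<Sum>a<n1. u a * mv n2 T f a) else 0)"
    using f by (auto simp: delta3_alt eta_T)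
  then show ?thesis using lin_fun_of_coeffs by simp
qed

lemma E2: "{x \<in> lin_fun n1 \<times> vecs n1. delta2 p q D2 m12 Eta x = (\<lambda>_. 0)} = delta3 p q D2 m12 Eta ` vecs n2"
proof
  show "{x \<in> lin_fun n1 \<times> vecs n1. delta2 p q D2 m12 Eta x = (\<lambda>_. 0)} \<subseteq> delta3 p q D2 m12 Eta ` vecs n2"
  proof
    fix x assume "x \<in> {x \<in> lin_fun n1 \<times> vecs n1. delta2 p q D2 m12 Eta x = (\<lambda>_. 0)}"
    then obtain \<phi> e where x: "x = (\<phi>, e)" "\<phi> \<in> lin_fun n1" "e \<in> vecs n1" "delta2 p q D2 m12 Eta (\<phi>, e) = (\<lambda>_. 0)"
      by auto
    then have "\<forall>b<n2. mv (n1 + n1) Q2 (coord \<phi> e) b = 0" using delta2_zero_iff by blast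
    then obtain f0 where f0: "\<forall>i<n1 + n1. coord \<phi> e i = mv n2 Q3 f0 i" using B2 unfolding EXA_def by blast
    define f where "f = trunc n2 f0"
    have fv: "f \<in> vecs n2" by (simp add: f_def)
    have Q3f: "mv n2 Q3 f i = mv n2 Q3 f0 i" for i by (simp add: f_def)
    have "delta3 p q D2 m12 Eta f = (\<phi>, e)"
    proof -
      have "(\<lambda>e'. if e' \<in> vecs n1 then lin_form n3 Eta (m12 e' f) else 0) = \<phi>"
      proof
        fix e' show "(if e' \<in> vecs n1 then lin_form n3 Eta (m12 e' f) else 0) = \<phi> e'"
        proof (cases "e' \<in> vecs n1")
          case True
          have "lin_form n3 Eta (m12 e' f) = (\<Sum>a<n1. e' a * mv n2 T f a)" by (rule eta_T[OF True fv])
          also have "\<dots> = (\<Sum>a<n1. e' a * \<phi> (uv a))"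
          proof (rule sum.cong[OF refl])
            fix a assume "a \<in> {..<n1}"
            then have "mv n2 T f a = \<phi> (uv a)" using f0[rule_format, of a] Q3f[of a] by (simp add: Q3_mv coord_def)
            then show "e' a * mv n2 T f a = e' a * \<phi> (uv a)" by simp
          qed
          also have "\<dots> = \<phi> e'" using lin_fun_expand[OF x(2) True] by simp
          finally show ?thesis using True by simp
        next
          case False then show ?thesis using lin_fun_out[OF x(2) False] by simp
        qed
      qed
      moreover have "mat_app n1 n2 D2 f = e"
      proof (rule vecs_eqI[OF mat_app_vecs x(3)])
        fix r assume r: "r < n1"
        have "mat_app n1 n2 D2 f r = mv n2 Q3 f (n1 + r)" using r by (simp add: mat_app_mv Q3_mv)
        also have "\<dots> = e r" using f0[rule_format, of "n1 + r"] Q3f[of "n1 + r"] r by (simp add: coord_def)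
        finally show "mat_app n1 n2 D2 f r = e r" .
      qed
      ultimately show ?thesis by (simp add: delta3_alt)
    qed
    then show "x \<in> delta3 p q D2 m12 Eta ` vecs n2" using fv x(1) by (metis image_eqI)
  qed
  show "delta3 p q D2 m12 Eta ` vecs n2 \<subseteq> {x \<in> lin_fun n1 \<times> vecs n1. delta2 p q D2 m12 Eta x = (\<lambda>_. 0)}"
  proof
    fix x assume "x \<in> delta3 p q D2 m12 Eta ` vecs n2"
    then obtain f where f: "f \<in> vecs n2" "x = delta3 p q D2 m12 Eta f" by auto
    define \<phi> where "\<phi> = fst x" 
    define e where "e = snd x"
    have x: "x = (\<phi>, e)" by (simp add: \<phi>_def e_def)
    have \<phi>l: "\<phi> \<in> lin_fun n1" using delta3_lin[OF f(1)] f(2) by (simp add: \<phi>_def)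
    have ev: "e \<in> vecs n1" using f(2) by (simp add: e_def delta3_alt)
    have co: "\<forall>i<n1 + n1. coord \<phi> e i = mv n2 Q3 f i"
    proof (intro allI impI)
      fix i assume i: "i < n1 + n1"
      show "coord \<phi> e i = mv n2 Q3 f i"
      proof (cases "i < n1")
        case True
        have "coord \<phi> e i = lin_form n3 Eta (m12 (uv i) f)" using True f by (simp add: coord_def \<phi>_def delta3_alt)
        also have "\<dots> = mv n2 T f i" using eta_T[of "uv i" f] f True by (simp add: sum_uv)
        finally show ?thesis using True by (simp add: Q3_mv)
      next
        case False
        then show ?thesis using f i by (simp add: coord_def e_def delta3_alt mat_app_mv Q3_mv)
      qed
    qed
    have "\<forall>b<n2. mv (n1 + n1) Q2 (coord \<phi> e) b = 0"
    proof (intro allI impI)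
      fix b assume b: "b < n2"
      have "mv (n1 + n1) Q2 (coord \<phi> e) b = mv (n1 + n1) Q2 (mv n2 Q3 f) b"
        by (rule arg_cong[of _ _ "\<lambda>x. x b"], rule mv_cong) (use co in auto)
      also have "\<dots> = mv n2 (mat_mul (n1 + n1) Q2 Q3) f b" by (rule mv_assoc)
      also have "\<dots> = 0" by (rule mv_zero_mat) (use BC32 b in auto)
      finally show "mv (n1 + n1) Q2 (coord \<phi> e) b = 0" .
    qed
    then have "delta2 p q D2 m12 Eta (\<phi>, e) = (\<lambda>_. 0)" using delta2_zero_iff[OF \<phi>l ev] by simp
    then show "x \<in> {x \<in> lin_fun n1 \<times> vecs n1. delta2 p q D2 m12 Eta x = (\<lambda>_. 0)}" using x \<phi>l ev by simp
  qed
qed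

lemma delta1_expand:
  assumes \<psi>: "\<psi> \<in> lin_fun n2" and c: "c \<in> vecs nc"
  shows "\<psi> (mat_app n2 nc M c) = (\<Sum>j<nc. c j * mv n2 (tr M) (\<lambda>b. \<psi> (uv b)) j)"
proof -
  have "\<psi> (mat_app n2 nc M c) = (\<Sum>b<n2. mat_app n2 nc M c b * \<psi> (uv b))"
    by (rule lin_fun_expand[OF \<psi> mat_app_vecs])
  also have "\<dots> = (\<Sum>b<n2. (\<Sum>j<nc. M b j * c j) * \<psi> (uv b))" by (rule sum.cong) (auto simp: mat_app_def)
  also have "\<dots> = (\<Sum>j<nc. c j * (\<Sum>b<n2. M b j * \<psi> (uv b)))" by (rule swap2)
  also have "\<dots> = (\<Sum>j<nc. c j * mv n2 (tr M) (\<lambda>b. \<psi> (uv b)) j)" by (simp add: mv_def tr_def)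
  finally show ?thesis .
qed

lemma E1:
  assumes SIa: "\<And>s \<psi>. \<forall>l<n3. s * Eta l = vm n2 \<psi> D3 l \<Longrightarrow> \<exists>e. s = (\<Sum>a<n1. D1 0 a * e a)"
  shows "{\<psi> \<in> lin_fun n2. delta1 p q D3 Iota \<psi> = (\<lambda>_. 0)} = delta2 p q D2 m12 Eta ` (lin_fun n1 \<times> vecs n1)"
proof
  show "{\<psi> \<in> lin_fun n2. delta1 p q D3 Iota \<psi> = (\<lambda>_. 0)} \<subseteq> delta2 p q D2 m12 Eta ` (lin_fun n1 \<times> vecs n1)"
  proof
    fix \<psi> assume "\<psi> \<in> {\<psi> \<in> lin_fun n2. delta1 p q D3 Iota \<psi> = (\<lambda>_. 0)}"
    then have \<psi>: "\<psi> \<in> lin_fun n2" and z: "delta1 p q D3 Iota \<psi> = (\<lambda>_. 0)" by auto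
    define \<psi>v where "\<psi>v = (\<lambda>b. \<psi> (uv b))"
    have "\<forall>j<nc. mv n2 (tr M) \<psi>v j = 0"
    proof (intro allI impI)
      fix j assume j: "j < nc"
      have "0 = delta1 p q D3 Iota \<psi> (uv j)" using z by simp
      also have "\<dots> = mv n2 (tr M) \<psi>v j"
        using j delta1_expand[OF \<psi>, of "uv j"] by (simp add: delta1_alt sum_uv \<psi>v_def)
      finally show "mv n2 (tr M) \<psi>v j = 0" by simp
    qed
    moreover have B1': "EXA nc n2 (n1 + n1) (tr M) Q2" by (rule B1) (use SIa in blast)
    ultimately obtain xv where xv: "\<forall>b<n2. \<psi>v b = mv (n1 + n1) Q2 xv b" unfolding EXA_def by blast
    define \<phi> where "\<phi> = (\<lambda>u. if u \<in> vecs n1 then (\<Sum>a<n1. u a * xv a) else 0)"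
    define e where "e = trunc n1 (\<lambda>a. xv (n1 + a))"
    have \<phi>l: "\<phi> \<in> lin_fun n1" unfolding \<phi>_def by (rule lin_fun_of_coeffs)
    have ev: "e \<in> vecs n1" by (simp add: e_def)
    have co: "coord \<phi> e i = xv i" if "i < n1 + n1" for i
      using that by (auto simp: coord_def \<phi>_def e_def trunc_def sum_uv)
    have "delta2 p q D2 m12 Eta (\<phi>, e) = \<psi>"
    proof
      fix f show "delta2 p q D2 m12 Eta (\<phi>, e) f = \<psi> f"
      proof (cases "f \<in> vecs n2")
        case True
        have "delta2 p q D2 m12 Eta (\<phi>, e) f = (\<Sum>b<n2. f b * mv (n1 + n1) Q2 (coord \<phi> e) b)"
          by (rule delta2_coord[OF \<phi>l ev True])
        also have "\<dots> = (\<Sum>b<n2. f b * \<psi> (uv b))"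
        proof (rule sum.cong[OF refl])
          fix b assume b: "b \<in> {..<n2}"
          have "mv (n1 + n1) Q2 (coord \<phi> e) b = mv (n1 + n1) Q2 xv b" by (rule arg_cong[of _ _ "\<lambda>x. x b"], rule mv_cong) (rule co)
          then show "f b * mv (n1 + n1) Q2 (coord \<phi> e) b = f b * \<psi> (uv b)" using xv b by (simp add: \<psi>v_def)
        qed
        also have "\<dots> = \<psi> f" using lin_fun_expand[OF \<psi> True] by simp
        finally show ?thesis .
      next
        case False then show ?thesis using lin_fun_out[OF \<psi> False] by (simp add: delta2_alt)
      qed
    qed
    then show "\<psi> \<in> delta2 p q D2 m12 Eta ` (lin_fun n1 \<times> vecs n1)" using \<phi>l ev by force
  qed
  show "delta2 p q D2 m12 Eta ` (lin_fun n1 \<times> vecs n1) \<subseteq> {\<psi> \<in> lin_fun n2. delta1 p q D3 Iota \<psi> = (\<lambda>_. 0)}"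
  proof
    fix \<psi> assume "\<psi> \<in> delta2 p q D2 m12 Eta ` (lin_fun n1 \<times> vecs n1)"
    then obtain \<phi> e where \<phi>: "\<phi> \<in> lin_fun n1" and e: "e \<in> vecs n1" and \<psi>: "\<psi> = delta2 p q D2 m12 Eta (\<phi>, e)" by auto
    define K where "K = mv (n1 + n1) Q2 (coord \<phi> e)"
    have \<psi>f: "\<psi> = (\<lambda>f. if f \<in> vecs n2 then (\<Sum>b<n2. f b * K b) else 0)"
    proof
      fix f show "\<psi> f = (if f \<in> vecs n2 then (\<Sum>b<n2. f b * K b) else 0)"
        using delta2_coord[OF \<phi> e, of f] by (simp add: \<psi> K_def delta2_alt)
    qed
    have \<psi>l: "\<psi> \<in> lin_fun n2" unfolding \<psi>f by (rule lin_fun_of_coeffs)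
    have "delta1 p q D3 Iota \<psi> = (\<lambda>_. 0)"
    proof
      fix c show "delta1 p q D3 Iota \<psi> c = 0"
      proof (cases "c \<in> vecs nc")
        case True
        have "delta1 p q D3 Iota \<psi> c = (\<Sum>j<nc. c j * mv n2 (tr M) (\<lambda>b. \<psi> (uv b)) j)"
          using True delta1_expand[OF \<psi>l True] by (simp add: delta1_alt)
        also have "\<dots> = (\<Sum>j<nc. c j * 0)"
        proof (rule sum.cong[OF refl])
          fix j assume j: "j \<in> {..<nc}"
          have "mv n2 (tr M) (\<lambda>b. \<psi> (uv b)) j = mv n2 (tr M) K j"
            by (rule arg_cong[of _ _ "\<lambda>x. x j"], rule mv_cong) (simp add: \<psi>f sum_uv)
          also have "\<dots> = mv (n1 + n1) (mat_mul n2 (tr M) Q2) (coord \<phi> e) j" by (simp add: K_def mv_assoc)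
          also have "\<dots> = 0" by (rule mv_zero_mat) (use BC21 j in auto)
          finally show "c j * mv n2 (tr M) (\<lambda>b. \<psi> (uv b)) j = c j * 0" by simp
        qed
        finally show ?thesis by simp
      next
        case False then show ?thesis by (simp add: delta1_alt)
      qed
    qed
    then show "\<psi> \<in> {\<psi> \<in> lin_fun n2. delta1 p q D3 Iota \<psi> = (\<lambda>_. 0)}" using \<psi>l by simp
  qed
qed

lemma B_acyc:
  assumes SIa: "\<And>s \<psi>. \<forall>l<n3. s * Eta l = vm n2 \<psi> D3 l \<Longrightarrow> \<exists>e. s = (\<Sum>a<n1. D1 0 a * e a)"
  shows "B_acyclic p q D2 D3 m12 Iota Eta"
proof -
  have E1': "{\<psi> \<in> lin_fun n2. delta1 p q D3 Iota \<psi> = (\<lambda>_. 0)} = delta2 p q D2 m12 Eta ` (lin_fun n1 \<times> vecs n1)"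
    by (rule E1) (use SIa in blast)
  show ?thesis unfolding B_acyclic_def e1 e2 e4 using E4 E3 E2 E1' by blast
qed

end


theorem mainTheorem2:
  fixes p q :: nat
    and D1 D2 D3 :: "nat \<Rightarrow> nat \<Rightarrow> 'a::comm_ring_1"
    and m11 m12 :: "(nat \<Rightarrow> 'a) \<Rightarrow> (nat \<Rightarrow> 'a) \<Rightarrow> (nat \<Rightarrow> 'a)"
    and Iota Kap :: "nat \<Rightarrow> nat \<Rightarrow> 'a" and Lv Eta :: "nat \<Rightarrow> 'a"
  assumes "noetherian_ring TYPE('a)"
    and "p \<ge> 1" and "q \<ge> 3"
    and "acyclic_A p q D1 D2 D3"
    and "dual_acyclic_A p q D1 D2 D3"
    and "dga_structure p q D1 D2 D3 m11 m12"
    and "decomposition q Iota Lv Kap Eta"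
    and "grade (minor_ideal (p + q) (q - 2) (delta4_mat q D3 Iota)) \<ge> 4"
  shows "B_acyclic p q D2 D3 m12 Iota Eta \<and>
         (grade (minor_ideal (p + q) (q - 2) (delta4_mat q D3 Iota)) = 4 \<or>
          minor_ideal (p + q) (q - 2) (delta4_mat q D3 Iota) = UNIV)"
proof -
  note noeth = assms(1)
  interpret A: Asetup p q D1 D2 D3 m11 m12 Iota Kap Lv Eta
    by unfold_locales (use assms in auto)
  have dec: "decomposition q Iota Lv Kap Eta" by (rule assms(7))
  have KI: "\<And>i j. i < q - 2 \<Longrightarrow> j < q - 2 \<Longrightarrow> mat_mul (q - 1) Kap Iota i j = id_mat i j"
    using dec by (simp add: decomposition_def)
  have EL: "(\<Sum>l<q - 1. Eta l * Lv l) = 1"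
    using dec by (simp add: decomposition_def lin_form_def)
  have EI: "\<And>j. j < q - 2 \<Longrightarrow> (\<Sum>l<q - 1. Eta l * Iota l j) = 0"
    using dec by (simp add: decomposition_def lin_form_def)
  have ID: "\<And>i j. i < q - 1 \<Longrightarrow> j < q - 1 \<Longrightarrow> mat_mul (q - 2) Iota Kap i j + Lv i * Eta j = id_mat i j"
    using dec by (simp add: decomposition_def)
  interpret B: Tsetup "p + 2" "p + q" "q - 1" "q - 2" D1 D2 D3 A.T Iota Kap Lv Eta p q m12
  proof unfold_locales
    show "EXA 1 (p + 2) (p + q) D1 D2" by (rule A.A1)
    show "EXA (p + 2) (p + q) (q - 1) D2 D3" by (rule A.A2)
    show "\<And>v. \<forall>i<p + q. mv (q - 1) D3 v i = 0 \<Longrightarrow> \<forall>i<q - 1. v i = 0" by (rule A.A3inj)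
    show "\<And>c. c < p + q \<Longrightarrow> mat_mul (p + 2) D1 D2 0 c = 0" by (rule A.C12)
    show "\<And>r c. r < p + 2 \<Longrightarrow> c < q - 1 \<Longrightarrow> mat_mul (p + q) D2 D3 r c = 0" by (rule A.C23)
    show "ROW (p + 2) 1 0 (\<lambda>_ _. 0) D1" by (rule A.R0)
    show "ROW (p + q) (p + 2) 1 D1 D2" by (rule A.R1)
    show "ROW (q - 1) (p + q) (p + 2) D2 D3" by (rule A.R2)
    show "\<And>a c. a < p + 2 \<Longrightarrow> c < q - 1 \<Longrightarrow> mat_mul (p + q) A.T D3 a c = D1 0 a * Eta c" by (rule A.TD3)
    show "\<And>b b'. b < p + q \<Longrightarrow> b' < p + q \<Longrightarrow> (\<Sum>a<p + 2. D2 a b * A.T a b') + (\<Sum>a<p + 2. D2 a b' * A.T a b) = 0"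
      by (rule A.Tsym)
    show "\<And>i j. i < q - 2 \<Longrightarrow> j < q - 2 \<Longrightarrow> mat_mul (q - 1) Kap Iota i j = id_mat i j" by (rule KI)
    show "(\<Sum>l<q - 1. Eta l * Lv l) = 1" by (rule EL)
    show "\<And>j. j < q - 2 \<Longrightarrow> (\<Sum>l<q - 1. Eta l * Iota l j) = 0" by (rule EI)
    show "\<And>i j. i < q - 1 \<Longrightarrow> j < q - 1 \<Longrightarrow> mat_mul (q - 2) Iota Kap i j + Lv i * Eta j = id_mat i j" by (rule ID)
    show "\<And>r H3. \<forall>i<q - 1. \<forall>c<q - 1. r * id_mat i c = mat_mul (p + q) H3 D3 i c \<Longrightarrow> \<exists>x. r = (\<Sum>a<p + 2. D1 0 a * x a)"
      by (rule A.faithful)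
    show "p + 2 = p + 2" "p + q = p + q" "q - 1 = q - 1" "q - 2 = q - 2" by simp_all
    show "\<And>e f. e \<in> vecs (p + 2) \<Longrightarrow> f \<in> vecs (p + q) \<Longrightarrow>
      lin_form (q - 1) Eta (m12 e f) = (\<Sum>x<p + 2. \<Sum>y<p + q. e x * f y * A.T x y)"
      by (rule A.eta_m12)
  qed
  have Jeq: "minor_ideal (p + q) (q - 2) (delta4_mat q D3 Iota) = ideal_gen (max_minors (p + q) (q - 2) B.M)"
    unfolding minor_ideal_def delta4_mat_def B.M_def ..
  have g4: "grade (ideal_gen (max_minors (p + q) (q - 2) B.M)) \<ge> 4" using assms(8) Jeq by simp
  have ext: "\<And>i. i < 4 \<Longrightarrow> ext_zero (ideal_gen (max_minors (p + q) (q - 2) B.M)) i"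
    using grade_ge4[OF g4] by blast
  have SIa: "\<And>s \<psi>. \<forall>l<q - 1. s * Eta l = vm (p + q) \<psi> D3 l \<Longrightarrow> \<exists>e. s = (\<Sum>a<p + 2. D1 0 a * e a)"
    using B.SI[OF noeth ext] by blast
  have BA: "B_acyclic p q D2 D3 m12 Iota Eta" by (rule B.B_acyc) (use SIa in blast)
  have G: "grade (minor_ideal (p + q) (q - 2) (delta4_mat q D3 Iota)) = 4 \<or>
          minor_ideal (p + q) (q - 2) (delta4_mat q D3 Iota) = UNIV"
  proof (cases "ideal_gen (max_minors (p + q) (q - 2) B.M) = UNIV")
    case True then show ?thesis using Jeq by simp
  next
    case False
    have "\<not> ext_zero (ideal_gen (max_minors (p + q) (q - 2) B.M)) 4"
      by (rule B.not_ext4[OF noeth ext False])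
    then have "grade (ideal_gen (max_minors (p + q) (q - 2) B.M)) = 4" by (rule grade_eq4[OF g4])
    then show ?thesis using Jeq by simp
  qed
  show ?thesis using BA G by blast
qed


end
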